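(* Suppose the following hold (Assumption 6): - $L_{\tilde f}B(x)$, $L_{\tilde g}B(x)$, $\gamma(B(x))$ and $u_{\text{ref}}(x)$ are twice continuously differentiable in $x$ on $\mathcal X$; - for every fixed dataset, the GP prediction functions $\mu_B(x,u)$ and $\sigma_B(x,u)$ are twice continuously differentiable in $x$ on $\mathcal X$. Let $x\in\mathcal X$ and a dataset $\mathbb D_N$ satisfy $\lambda_\dagger(x|\mathbb D_N)<0$. Then the solution map $x'\mapsto u^*(x')$ of the GP-CBF-SOCP with the fixed dataset $\mathbb D_N$ is locally Lipschitz continuous around $x$.
   Context: Consider the system $\dot x=f(x)+g(x)u$ with $x\in\mathcal X\subset\mathbb R^n$ and $u\in\mathbb R^m$, where $f,g$ are locally Lipschitz and unknown. A nominal model $\tilde f,\tilde g$ is available. Let $B:\mathcal X\to\mathbb R$ be $C^1$, let $\gamma$ be extended class-$\mathcal K_\infty$, and let $u_{\text{ref}}$ be a reference controller. Lie derivatives: $L_{\tilde f}B=\nabla B\,\tilde f$ and $L_{\tilde g}B=\nabla B\,\tilde g\in\mathbb R^{1\times m}$; $L_fB$ and $L_gB$ are defined similarly. Set $\Delta_B(x,u)=(L_fB-L_{\tilde f}B)(x)+(L_gB-L_{\tilde g}B)(x)u$. A dataset $\mathbb D_N=\{((x_j,u_j),z_j)\}$ consists of $z_j=\Delta_B(x_j,u_j)+\epsilon_j$. GP model with the affine dot product kernel $k_c((x,y),(x',y'))=y^T\mathrm{diag}(k_1(x,x'),\dots,k_{m+1}(x,x'))y'$: - Let $y_j=[1,u_j^T]^T$,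 $\mathbf z=(z_j)$, let $\sigma_n>0$, and let $K_c$ be the Gram matrix on the data. - Let $K_{**}(x)=\mathrm{diag}(k_i(x,x))$, and let $K_{*Y}(x)$ have entries $k_i(x,x_j)(y_j)_i$. - Define $m_B(x|\mathbb D)=K_{*Y}(K_c+\sigma_n^2I)^{-1}\mathbf z$ and $\Sigma_B(x|\mathbb D)=K_{**}-K_{*Y}(K_c+\sigma_n^2I)^{-1}K_{*Y}^T$, which is positive definite. - The posterior mean and standard deviation are $\mu_B(x,u)=m_B^T[1;u]$ and $\sigma_B(x,u)=\sqrt{[1,u^T]\Sigma_B[1;u]}$. $\beta>0$ is a constant. Derived quantities: - $\widehat{L_gB}=L_{\tilde g}B+((m_B)_2,\dots,(m_B)_{m+1})$. - $\Sigma_{L_gB}$ is the lower-right $m\times m$ block of $\Sigma_B$. - $\lambda_\dagger(x|\mathbb D)$ is the minimum eigenvalue of $\beta^2\Sigma_{L_gB}(x|\mathbb D)-\widehat{L_gB}(x|\mathbb D)^T\widehat{L_gB}(x|\mathbb D)$. The GP-CBF-SOCP at $x$ with dataset $\mathbb D_N$, whose minimizer is denoted $u^*(x)$, is: minimize $\|u-u_{\text{ref}}(x)\|_2^2$ over $u\in\mathbb R^m$ subject to $L_{\tilde f}B(x)+L_{\tilde g}B(x)u+\mu_B(x,u|\mathbb D_N)-\beta\sigma_B(x,u|\mathbb D_N)+\gamma(B(x))\ge0$. *)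

theory Defs
  imports "HOL-Analysis.Analysis"
begin

definition C2_on :: "'a::euclidean_space set \<Rightarrow> ('a \<Rightarrow> 'b::real_normed_vector) \<Rightarrow> bool" where
  "C2_on S h \<longleftrightarrow>
     (\<exists>(h' :: 'a \<Rightarrow> ('a \<Rightarrow>\<^sub>L 'b)) (h'' :: 'a \<Rightarrow> ('a \<Rightarrow>\<^sub>L ('a \<Rightarrow>\<^sub>L 'b))).
        (\<forall>x\<in>S. (h has_derivative blinfun_apply (h' x)) (at x) \<and>
                (h' has_derivative blinfun_apply (h'' x)) (at x)) \<and>
        continuous_on S h'')"

definition ext_class_K_inf :: "(real \<Rightarrow> real) \<Rightarrow> bool" where
  "ext_class_K_inf \<gamma> \<longleftrightarrow> continuous_on UNIV \<gamma> \<and> strict_mono \<gamma> \<and> \<gamma> 0 = 0 \<and>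
     filterlim \<gamma> at_top at_top \<and> filterlim \<gamma> at_bot at_bot"

definition is_eigenvalue :: "real^('k::finite)^('k::finite) \<Rightarrow> real \<Rightarrow> bool" where
  "is_eigenvalue M l \<longleftrightarrow> (\<exists>v. v \<noteq> 0 \<and> M *v v = l *\<^sub>R v)"

definition min_eigenvalue :: "real^('k::finite)^('k::finite) \<Rightarrow> real" where
  "min_eigenvalue M = Min {l. is_eigenvalue M l}"

definition psd_kernel :: "('a \<Rightarrow> 'a \<Rightarrow> real) \<Rightarrow> bool" where
  "psd_kernel k \<longleftrightarrow> (\<forall>x x'. k x x' = k x' x) \<and>
     (\<forall>F c. finite F \<longrightarrow> (\<Sum>a\<in>F. \<Sum>b\<in>F. c a * c b * k a b) \<ge> 0)"

definition LfB :: "(real^('n::finite) \<Rightarrow> real^('n::finite)) \<Rightarrow> (real^('n::finite) \<Rightarrow> real^('n::finite)) \<Rightarrow> real^('n::finite) \<Rightarrow> real" where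
  "LfB gradB ft x = gradB x \<bullet> ft x"

definition LgB :: "(real^('n::finite) \<Rightarrow> real^('n::finite)) \<Rightarrow> (real^('n::finite) \<Rightarrow> real^('m::finite)^('n::finite)) \<Rightarrow> real^('n::finite) \<Rightarrow> real^('m::finite)" where
  "LgB gradB gt x = gradB x v* gt x"

text \<open>The (m+1) kernel/feature indices are represented by the type 'm option:
  None is the first (constant) index, Some i the index of input component u_i.\<close>

definition aug :: "real^('m::finite) \<Rightarrow> real^(('m::finite) option)" where
  "aug u = (\<chi> i. case i of None \<Rightarrow> 1 | Some j \<Rightarrow> u $ j)"

definition gram_c ::
  "(('m::finite) option \<Rightarrow> real^('n::finite) \<Rightarrow> real^('n::finite) \<Rightarrow> real) \<Rightarrow> (('N::finite) \<Rightarrow> real^('n::finite)) \<Rightarrow> (('N::finite) \<Rightarrow> real^('m::finite)) \<Rightarrow> real^('N::finite)^('N::finite)" where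
  "gram_c k xs us = (\<chi> j l. \<Sum>i\<in>UNIV. aug (us j) $ i * k i (xs j) (xs l) * aug (us l) $ i)"

definition K_starY ::
  "(('m::finite) option \<Rightarrow> real^('n::finite) \<Rightarrow> real^('n::finite) \<Rightarrow> real) \<Rightarrow> (('N::finite) \<Rightarrow> real^('n::finite)) \<Rightarrow> (('N::finite) \<Rightarrow> real^('m::finite)) \<Rightarrow> real^('n::finite)
     \<Rightarrow> real^('N::finite)^(('m::finite) option)" where
  "K_starY k xs us x = (\<chi> i j. k i x (xs j) * aug (us j) $ i)"

definition K_starstar :: "(('m::finite) option \<Rightarrow> real^('n::finite) \<Rightarrow> real^('n::finite) \<Rightarrow> real) \<Rightarrow> real^('n::finite) \<Rightarrow> real^(('m::finite) option)^(('m::finite) option)" where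
  "K_starstar k x = (\<chi> i l. if i = l then k i x x else 0)"

definition m_B ::
  "(('m::finite) option \<Rightarrow> real^('n::finite) \<Rightarrow> real^('n::finite) \<Rightarrow> real) \<Rightarrow> real \<Rightarrow> (('N::finite) \<Rightarrow> real^('n::finite)) \<Rightarrow> (('N::finite) \<Rightarrow> real^('m::finite)) \<Rightarrow> real^('N::finite)
     \<Rightarrow> real^('n::finite) \<Rightarrow> real^(('m::finite) option)" where
  "m_B k sn xs us zs x =
     K_starY k xs us x *v (matrix_inv (gram_c k xs us + (sn\<^sup>2) *\<^sub>R mat 1) *v zs)"

definition Sigma_B ::
  "(('m::finite) option \<Rightarrow> real^('n::finite) \<Rightarrow> real^('n::finite) \<Rightarrow> real) \<Rightarrow> real \<Rightarrow> (('N::finite) \<Rightarrow> real^('n::finite)) \<Rightarrow> (('N::finite) \<Rightarrow> real^('m::finite))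
     \<Rightarrow> real^('n::finite) \<Rightarrow> real^(('m::finite) option)^(('m::finite) option)" where
  "Sigma_B k sn xs us x =
     K_starstar k x - K_starY k xs us x ** matrix_inv (gram_c k xs us + (sn\<^sup>2) *\<^sub>R mat 1)
       ** transpose (K_starY k xs us x)"

definition mu_B ::
  "(('m::finite) option \<Rightarrow> real^('n::finite) \<Rightarrow> real^('n::finite) \<Rightarrow> real) \<Rightarrow> real \<Rightarrow> (('N::finite) \<Rightarrow> real^('n::finite)) \<Rightarrow> (('N::finite) \<Rightarrow> real^('m::finite)) \<Rightarrow> real^('N::finite)
     \<Rightarrow> real^('n::finite) \<Rightarrow> real^('m::finite) \<Rightarrow> real" where
  "mu_B k sn xs us zs x u = m_B k sn xs us zs x \<bullet> aug u"

definition sigma_B ::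
  "(('m::finite) option \<Rightarrow> real^('n::finite) \<Rightarrow> real^('n::finite) \<Rightarrow> real) \<Rightarrow> real \<Rightarrow> (('N::finite) \<Rightarrow> real^('n::finite)) \<Rightarrow> (('N::finite) \<Rightarrow> real^('m::finite))
     \<Rightarrow> real^('n::finite) \<Rightarrow> real^('m::finite) \<Rightarrow> real" where
  "sigma_B k sn xs us x u = sqrt (aug u \<bullet> (Sigma_B k sn xs us x *v aug u))"

definition LgB_hat ::
  "(real^('n::finite) \<Rightarrow> real^('n::finite)) \<Rightarrow> (real^('n::finite) \<Rightarrow> real^('m::finite)^('n::finite)) \<Rightarrow>
   (('m::finite) option \<Rightarrow> real^('n::finite) \<Rightarrow> real^('n::finite) \<Rightarrow> real) \<Rightarrow> real \<Rightarrow> (('N::finite) \<Rightarrow> real^('n::finite)) \<Rightarrow> (('N::finite) \<Rightarrow> real^('m::finite)) \<Rightarrow> real^('N::finite)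
     \<Rightarrow> real^('n::finite) \<Rightarrow> real^('m::finite)" where
  "LgB_hat gradB gt k sn xs us zs x =
     LgB gradB gt x + (\<chi> i. m_B k sn xs us zs x $ Some i)"

definition Sigma_LgB ::
  "(('m::finite) option \<Rightarrow> real^('n::finite) \<Rightarrow> real^('n::finite) \<Rightarrow> real) \<Rightarrow> real \<Rightarrow> (('N::finite) \<Rightarrow> real^('n::finite)) \<Rightarrow> (('N::finite) \<Rightarrow> real^('m::finite))
     \<Rightarrow> real^('n::finite) \<Rightarrow> real^('m::finite)^('m::finite)" where
  "Sigma_LgB k sn xs us x = (\<chi> i j. Sigma_B k sn xs us x $ Some i $ Some j)"

definition lambda_dagger ::
  "real \<Rightarrow> (real^('n::finite) \<Rightarrow> real^('n::finite)) \<Rightarrow> (real^('n::finite) \<Rightarrow> real^('m::finite)^('n::finite)) \<Rightarrow>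
   (('m::finite) option \<Rightarrow> real^('n::finite) \<Rightarrow> real^('n::finite) \<Rightarrow> real) \<Rightarrow> real \<Rightarrow> (('N::finite) \<Rightarrow> real^('n::finite)) \<Rightarrow> (('N::finite) \<Rightarrow> real^('m::finite)) \<Rightarrow> real^('N::finite)
     \<Rightarrow> real^('n::finite) \<Rightarrow> real" where
  "lambda_dagger \<beta> gradB gt k sn xs us zs x =
     (let g = LgB_hat gradB gt k sn xs us zs x in
      min_eigenvalue ((\<beta>\<^sup>2) *\<^sub>R Sigma_LgB k sn xs us x - (\<chi> i j. g $ i * g $ j)))"

definition socp_feasible ::
  "real \<Rightarrow> (real \<Rightarrow> real) \<Rightarrow> (real^('n::finite) \<Rightarrow> real) \<Rightarrow> (real^('n::finite) \<Rightarrow> real^('n::finite)) \<Rightarrow> (real^('n::finite) \<Rightarrow> real^('n::finite)) \<Rightarrow>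
   (real^('n::finite) \<Rightarrow> real^('m::finite)^('n::finite)) \<Rightarrow>
   (('m::finite) option \<Rightarrow> real^('n::finite) \<Rightarrow> real^('n::finite) \<Rightarrow> real) \<Rightarrow> real \<Rightarrow> (('N::finite) \<Rightarrow> real^('n::finite)) \<Rightarrow> (('N::finite) \<Rightarrow> real^('m::finite)) \<Rightarrow> real^('N::finite)
     \<Rightarrow> real^('n::finite) \<Rightarrow> real^('m::finite) \<Rightarrow> bool" where
  "socp_feasible \<beta> \<gamma> B gradB ft gt k sn xs us zs x u \<longleftrightarrow>
     LfB gradB ft x + LgB gradB gt x \<bullet> u + mu_B k sn xs us zs x u
       - \<beta> * sigma_B k sn xs us x u + \<gamma> (B x) \<ge> 0"

definition socp_minimizer ::
  "real \<Rightarrow> (real \<Rightarrow> real) \<Rightarrow> (real^('n::finite) \<Rightarrow> real) \<Rightarrow> (real^('n::finite) \<Rightarrow> real^('n::finite)) \<Rightarrow> (real^('n::finite) \<Rightarrow> real^('n::finite)) \<Rightarrow>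
   (real^('n::finite) \<Rightarrow> real^('m::finite)^('n::finite)) \<Rightarrow> (real^('n::finite) \<Rightarrow> real^('m::finite)) \<Rightarrow>
   (('m::finite) option \<Rightarrow> real^('n::finite) \<Rightarrow> real^('n::finite) \<Rightarrow> real) \<Rightarrow> real \<Rightarrow> (('N::finite) \<Rightarrow> real^('n::finite)) \<Rightarrow> (('N::finite) \<Rightarrow> real^('m::finite)) \<Rightarrow> real^('N::finite)
     \<Rightarrow> real^('n::finite) \<Rightarrow> real^('m::finite) \<Rightarrow> bool" where
  "socp_minimizer \<beta> \<gamma> B gradB ft gt uref k sn xs us zs x u \<longleftrightarrow>
     socp_feasible \<beta> \<gamma> B gradB ft gt k sn xs us zs x u \<and>
     (\<forall>v. socp_feasible \<beta> \<gamma> B gradB ft gt k sn xs us zs x v \<longrightarrow>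
          (norm (u - uref x))\<^sup>2 \<le> (norm (v - uref x))\<^sup>2)"

end

theory Submission
  imports Defs
begin



lemma quad_bound:
  fixes D d A B :: real
  assumes "D \<ge> 0" "d \<ge> 0" "A \<ge> 0" "B \<ge> 0" "D^2 \<le> A*D*d + B*d^2"
  shows "D \<le> (A+B+1)*d"
proof (rule ccontr)
  assume "\<not> ?thesis"
  hence h: "D > (A+B+1)*d" by simp
  have "(A+B+1)*d \<ge> (B+1)*d" using assms by (simp add: mult_right_mono)
  hence h2: "D > (B+1)*d" using h by linarith
  have "0 \<le> (B+1)*d" using assms by simp
  hence Dp: "D > 0" using h2 by linarith
  have "D*D > (A+B+1)*d*D" using h Dp by (intro mult_strict_right_mono) auto
  moreover have "(B+1)*d*D \<ge> (B+1)*d*((B+1)*d)" using h2 assms by (intro mult_left_mono) auto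
  moreover have "(B+1)*d*((B+1)*d) \<ge> B*d^2" using assms by (simp add: power2_eq_square algebra_simps)
  ultimately show False using assms(5) by (simp add: power2_eq_square algebra_simps)
qed

lemma lip_core:
  fixes c :: "'y::real_normed_vector \<Rightarrow> real^'m \<Rightarrow> real" and G :: "'y \<Rightarrow> real^'m \<Rightarrow> real^'m"
    and r u :: "'y \<Rightarrow> real^'m" and mu :: "'y \<Rightarrow> real" and Y :: "'y set"
  assumes kkt: "\<And>y. y\<in>Y \<Longrightarrow> c y (u y) \<ge> 0 \<and> mu y \<ge> 0 \<and> mu y * c y (u y) = 0 \<and> u y - r y = mu y *\<^sub>R G y (u y)"
    and conc: "\<And>y a b. y\<in>Y \<Longrightarrow> c y b \<le> c y a + G y a \<bullet> (b - a)"
    and ub: "\<And>y. y\<in>Y \<Longrightarrow> norm (u y) \<le> \<rho>"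
    and rb: "\<And>y. y\<in>Y \<Longrightarrow> norm (r y) \<le> R"
    and rl: "\<And>y1 y2. y1\<in>Y \<Longrightarrow> y2\<in>Y \<Longrightarrow> norm (r y1 - r y2) \<le> Lr * norm (y1 - y2)"
    and cl: "\<And>y1 y2 a. y1\<in>Y \<Longrightarrow> y2\<in>Y \<Longrightarrow> norm a \<le> \<rho> \<Longrightarrow> \<bar>c y1 a - c y2 a\<bar> \<le> Lc * norm (y1 - y2)"
    and Gl: "\<And>y1 y2 a. y1\<in>Y \<Longrightarrow> y2\<in>Y \<Longrightarrow> norm a \<le> \<rho> \<Longrightarrow> norm (G y1 a - G y2 a) \<le> LG * norm (y1 - y2)"
    and Gu: "\<And>y a b. y\<in>Y \<Longrightarrow> norm a \<le> \<rho> \<Longrightarrow> norm b \<le> \<rho> \<Longrightarrow> norm (G y a - G y b) \<le> LGu * norm (a - b)"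
    and Gb: "\<And>y a. y\<in>Y \<Longrightarrow> norm a \<le> \<rho> \<Longrightarrow> c y a = 0 \<Longrightarrow> norm (G y a) \<ge> g0"
    and g0: "g0 > 0"
    and nn: "Lr \<ge> 0" "Lc \<ge> 0" "LG \<ge> 0" "LGu \<ge> 0" "\<rho> \<ge> 0" "R \<ge> 0"
  shows "\<exists>L. \<forall>y1\<in>Y. \<forall>y2\<in>Y. norm (u y1 - u y2) \<le> L * norm (y1 - y2)"
proof -
  define M where "M = (\<rho> + R) / g0"
  have M0: "M \<ge> 0" using nn g0 by (simp add: M_def)
  have muM: "mu y \<le> M" if y: "y \<in> Y" for y
  proof (cases "mu y = 0")
    case True then show ?thesis using M0 by simp
  next
    case False
    with kkt[OF y] have mp: "mu y > 0" and c0: "c y (u y) = 0" and e: "u y - r y = mu y *\<^sub>R G y (u y)" by auto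
    have "norm (G y (u y)) \<ge> g0" using Gb[OF y ub[OF y] c0] .
    have "norm (u y - r y) = mu y * norm (G y (u y))" using e mp by simp
    also have "\<dots> \<ge> mu y * g0" using \<open>norm (G y (u y)) \<ge> g0\<close> mp by (simp add: mult_left_mono)
    finally have "mu y * g0 \<le> norm (u y - r y)" .
    moreover have "norm (u y - r y) \<le> \<rho> + R" using norm_triangle_ineq4[of "u y" "r y"] ub[OF y] rb[OF y] by linarith
    ultimately have "mu y * g0 \<le> \<rho> + R" by linarith
    then show ?thesis using g0 by (simp add: M_def pos_le_divide_eq)
  qed
  define q where "q = Lc / g0"
  have q0: "q \<ge> 0" using nn g0 by (simp add: q_def)
  define A where "A = Lr + M * LG + (1 + M * LGu) * q"
  define B where "B = (Lr + M * LG) * q"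
  have A0: "A \<ge> 0" and B0: "B \<ge> 0" using nn M0 q0 by (auto simp: A_def B_def)
  have main: "norm (u y1 - u y2) \<le> (A + B + 1) * norm (y1 - y2)" if y1: "y1 \<in> Y" and y2: "y2 \<in> Y" for y1 y2
  proof -
    define u1 where "u1 = u y1"
    define u2 where "u2 = u y2"
    define r1 where "r1 = r y1"
    define r2 where "r2 = r y2"
    define m1 where "m1 = mu y1"
    define m2 where "m2 = mu y2"
    define G1 where "G1 = G y1 (u y1)"
    define G2 where "G2 = G y2 (u y2)"
    define D where "D = norm (u1 - u2)"
    define d where "d = norm (y1 - y2)"
    note k1 = kkt[OF y1, folded u1_def r1_def m1_def G1_def]
    note k2 = kkt[OF y2, folded u2_def r2_def m2_def G2_def]
    have nu1: "norm u1 \<le> \<rho>" and nu2: "norm u2 \<le> \<rho>" using ub y1 y2 by (auto simp: u1_def u2_def)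
    have m1M: "m1 \<le> M" and m2M: "m2 \<le> M" using muM y1 y2 by (auto simp: m1_def m2_def)
    have uu: "u1 - u2 = (r1 - r2) + (m1 *\<^sub>R G1 - m2 *\<^sub>R G2)"
      using k1 k2 by (simp add: algebra_simps)
    define T where "T = (u1 - u2) \<bullet> (m1 *\<^sub>R G1 - m2 *\<^sub>R G2)"
    have DT: "D^2 = (u1 - u2) \<bullet> (r1 - r2) + T"
      unfolding D_def T_def power2_norm_eq_inner
      by (subst (2) uu) (simp add: inner_add_right)
    have er: "norm (r1 - r2) \<le> Lr * d" using rl[OF y1 y2] by (simp add: r1_def r2_def d_def)
    define G12 where "G12 = G y2 u1"
    have cc1: "G12 \<bullet> (u1 - u2) \<le> c y2 u1 - c y2 u2"
      using conc[OF y2, where a=u1 and b=u2] by (simp add: G12_def inner_diff_right)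
    have cc2: "- (G2 \<bullet> (u1 - u2)) \<le> c y2 u2 - c y2 u1"
      using conc[OF y2, where a=u2 and b=u1] by (simp add: G2_def u2_def inner_diff_right)
    have gd: "norm (G1 - G12) \<le> LG * d"
      using Gl[OF y1 y2 nu1] by (simp add: G1_def G12_def u1_def d_def)
    have "(G1 - G12) \<bullet> (u1 - u2) \<le> norm (G1 - G12) * D"
      unfolding D_def by (rule Cauchy_Schwarz_ineq2[THEN abs_le_D1])
    also have "\<dots> \<le> LG * d * D" using gd by (simp add: D_def mult_right_mono)
    finally have gd2: "(G1 - G12) \<bullet> (u1 - u2) \<le> LG * d * D" .
    have m10: "m1 \<ge> 0" and m20: "m2 \<ge> 0" using k1 k2 by auto
    have t1: "m1 * (G1 \<bullet> (u1 - u2)) \<le> m1 * (c y2 u1 - c y2 u2) + m1 * (LG * d * D)"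
    proof -
      have "G1 \<bullet> (u1 - u2) = G12 \<bullet> (u1 - u2) + (G1 - G12) \<bullet> (u1 - u2)" by (simp add: inner_diff_left)
      also have "\<dots> \<le> (c y2 u1 - c y2 u2) + LG * d * D" using cc1 gd2 by linarith
      finally have "G1 \<bullet> (u1 - u2) \<le> (c y2 u1 - c y2 u2) + LG * d * D" .
      hence "m1 * (G1 \<bullet> (u1 - u2)) \<le> m1 * ((c y2 u1 - c y2 u2) + LG * d * D)"
        using m10 by (rule mult_left_mono)
      thus ?thesis by (simp add: distrib_left)
    qed
    have t2: "m2 * (- (G2 \<bullet> (u1 - u2))) \<le> m2 * (c y2 u2 - c y2 u1)"
      using cc2 m20 by (rule mult_left_mono)
    have comp2: "m2 * c y2 u2 = 0" using k2 by (simp add: u2_def)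
    have comp1: "m1 * c y1 u1 = 0" using k1 by (simp add: u1_def)
    have pos2: "m1 * c y2 u2 \<ge> 0" using m10 k2 by (simp add: u2_def)
    have Tle: "T \<le> (m1 - m2) * c y2 u1 + m1 * (LG * d * D)"
    proof -
      have "T = m1 * (G1 \<bullet> (u1 - u2)) + m2 * (- (G2 \<bullet> (u1 - u2)))"
        unfolding T_def by (simp add: inner_diff_left inner_diff_right inner_commute right_diff_distrib)
      also have "\<dots> \<le> m1 * (c y2 u1 - c y2 u2) + m1 * (LG * d * D) + m2 * (c y2 u2 - c y2 u1)"
        using t1 t2 by linarith
      also have "\<dots> = (m1 - m2) * c y2 u1 - m1 * c y2 u2 + m2 * c y2 u2 + m1 * (LG * d * D)"
        by (simp add: algebra_simps)
      also have "\<dots> \<le> (m1 - m2) * c y2 u1 + m1 * (LG * d * D)" using comp2 pos2 by linarith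
      finally show ?thesis .
    qed
    have cd: "\<bar>c y2 u1 - c y1 u1\<bar> \<le> Lc * d"
      using cl[OF y2 y1 nu1] by (simp add: d_def norm_minus_commute)
    have "(m1 - m2) * c y2 u1 = (m1 - m2) * (c y2 u1 - c y1 u1) - m2 * c y1 u1"
      using comp1 by (simp add: algebra_simps)
    also have "\<dots> \<le> (m1 - m2) * (c y2 u1 - c y1 u1)"
      using m20 k1 by (simp add: u1_def)
    also have "\<dots> \<le> \<bar>m1 - m2\<bar> * (Lc * d)"
    proof -
      have "(m1 - m2) * (c y2 u1 - c y1 u1) \<le> \<bar>(m1 - m2) * (c y2 u1 - c y1 u1)\<bar>" by (rule abs_ge_self)
      also have "\<dots> = \<bar>m1 - m2\<bar> * \<bar>c y2 u1 - c y1 u1\<bar>" by (rule abs_mult)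
      also have "\<dots> \<le> \<bar>m1 - m2\<bar> * (Lc * d)" using cd by (rule mult_left_mono) simp
      finally show ?thesis .
    qed
    finally have Tm: "(m1 - m2) * c y2 u1 \<le> \<bar>m1 - m2\<bar> * (Lc * d)" .
    define e1 where "e1 = u1 - r1"
    define e2 where "e2 = u2 - r2"
    have e1G: "e1 = m1 *\<^sub>R G1" and e2G: "e2 = m2 *\<^sub>R G2" using k1 k2 by (simp_all add: e1_def e2_def)
    have ne: "norm (e1 - e2) \<le> D + Lr * d"
    proof -
      have "e1 - e2 = (u1 - u2) - (r1 - r2)" by (simp add: e1_def e2_def algebra_simps)
      hence "norm (e1 - e2) \<le> norm (u1 - u2) + norm (r1 - r2)" using norm_triangle_ineq4[of "u1 - u2" "r1 - r2"] by simp
      thus ?thesis using er by (simp add: D_def)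
    qed
    have nG: "norm (G1 - G2) \<le> LG * d + LGu * D"
    proof -
      have "G1 - G2 = (G1 - G12) + (G12 - G2)" by simp
      hence "norm (G1 - G2) \<le> norm (G1 - G12) + norm (G12 - G2)" using norm_triangle_ineq[of "G1 - G12" "G12 - G2"] by simp
      moreover have "norm (G12 - G2) \<le> LGu * D"
        using Gu[OF y2 nu1 nu2] by (simp add: G12_def G2_def u2_def D_def)
      ultimately show ?thesis using gd by linarith
    qed
    have mdiff: "\<bar>m1 - m2\<bar> \<le> (norm (e1 - e2) + M * norm (G1 - G2)) / g0"
    proof -
      have X0: "0 \<le> M * norm (G1 - G2)" using M0 by simp
      have one: "m \<le> norm (e - e') / g0" if "m > 0" "y \<in> Y" "e = m *\<^sub>R G y (u y)" "c y (u y) = 0" "e' = 0"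
        for m e e' y
      proof -
        have "norm (G y (u y)) \<ge> g0" using Gb[OF that(2) ub[OF that(2)] that(4)] .
        hence "m * g0 \<le> m * norm (G y (u y))" using that(1) by (simp add: mult_left_mono)
        also have "\<dots> = norm (e - e')" using that by simp
        finally show ?thesis using g0 by (simp add: pos_le_divide_eq)
      qed
      consider "m1 = 0" | "m2 = 0" | "m1 > 0 \<and> m2 > 0" using m10 m20 by linarith
      then show ?thesis
      proof cases
        case 1
        hence "e1 = 0" using e1G by simp
        show ?thesis
        proof (cases "m2 = 0")
          case True then show ?thesis using 1 X0 g0 by simp
        next
          case False
          hence "m2 > 0" using m20 by simp
          hence c2: "c y2 (u y2) = 0" using k2 by (simp add: u2_def)
          have "m2 \<le> norm (e2 - e1) / g0"
            using one[OF \<open>m2 > 0\<close> y2 _ c2 \<open>e1 = 0\<close>] e2G by (simp add: G2_def)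
          hence "m2 \<le> norm (e1 - e2) / g0" by (simp add: norm_minus_commute)
          moreover have "0 \<le> M * norm (G1 - G2) / g0" using X0 g0 by simp
          ultimately show ?thesis using 1 m20 by (simp add: add_divide_distrib)
        qed
      next
        case 2
        hence "e2 = 0" using e2G by simp
        show ?thesis
        proof (cases "m1 = 0")
          case True then show ?thesis using 2 X0 g0 by simp
        next
          case False
          hence "m1 > 0" using m10 by simp
          hence c1: "c y1 (u y1) = 0" using k1 by (simp add: u1_def)
          have "m1 \<le> norm (e1 - e2) / g0"
            using one[OF \<open>m1 > 0\<close> y1 _ c1 \<open>e2 = 0\<close>] e1G by (simp add: G1_def)
          moreover have "0 \<le> M * norm (G1 - G2) / g0" using X0 g0 by simp
          ultimately show ?thesis using 2 m10 by (simp add: add_divide_distrib)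
        qed
      next
        case 3
        hence c1: "c y1 (u y1) = 0" and c2: "c y2 (u y2) = 0" using k1 k2 by (auto simp: u1_def u2_def)
        have g1: "norm G1 \<ge> g0" using Gb[OF y1 ub[OF y1] c1] by (simp add: G1_def)
        have g2: "norm G2 \<ge> g0" using Gb[OF y2 ub[OF y2] c2] by (simp add: G2_def)
        have G1p: "norm G1 > 0" using g1 g0 by linarith
        have ne1: "norm e1 = m1 * norm G1" and ne2: "norm e2 = m2 * norm G2" using e1G e2G 3 by auto
        have "m1 - m2 = ((norm e1 - norm e2) + m2 * (norm G2 - norm G1)) / norm G1"
          using G1p ne1 ne2 by (simp add: field_simps)
        hence "\<bar>m1 - m2\<bar> = \<bar>(norm e1 - norm e2) + m2 * (norm G2 - norm G1)\<bar> / norm G1" by simp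
        also have "\<dots> \<le> (norm (e1 - e2) + M * norm (G1 - G2)) / norm G1"
        proof (rule divide_right_mono)
          have a: "\<bar>norm e1 - norm e2\<bar> \<le> norm (e1 - e2)" by (rule norm_triangle_ineq3)
          have "\<bar>m2 * (norm G2 - norm G1)\<bar> = m2 * \<bar>norm G2 - norm G1\<bar>" using m20 by (simp add: abs_mult)
          also have "\<dots> \<le> M * norm (G1 - G2)"
            using m2M m20 norm_triangle_ineq3[of G2 G1] by (intro mult_mono) (auto simp: norm_minus_commute)
          finally show "\<bar>(norm e1 - norm e2) + m2 * (norm G2 - norm G1)\<bar> \<le> norm (e1 - e2) + M * norm (G1 - G2)"
            using a abs_triangle_ineq[of "norm e1 - norm e2" "m2 * (norm G2 - norm G1)"] by linarith
        qed simp
        also have "\<dots> \<le> (norm (e1 - e2) + M * norm (G1 - G2)) / g0"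
          using g1 g0 X0 G1p by (intro divide_left_mono) (auto intro: mult_pos_pos)
        finally show ?thesis .
      qed
    qed
    have mdiff2: "\<bar>m1 - m2\<bar> \<le> (D + Lr * d + M * (LG * d + LGu * D)) / g0"
    proof -
      have "M * norm (G1 - G2) \<le> M * (LG * d + LGu * D)" using nG M0 by (rule mult_left_mono)
      hence "norm (e1 - e2) + M * norm (G1 - G2) \<le> D + Lr * d + M * (LG * d + LGu * D)" using ne by linarith
      hence "(norm (e1 - e2) + M * norm (G1 - G2)) / g0 \<le> (D + Lr * d + M * (LG * d + LGu * D)) / g0"
        using g0 by (intro divide_right_mono) auto
      thus ?thesis using mdiff by linarith
    qed
    have D0: "D \<ge> 0" and d0: "d \<ge> 0" by (simp_all add: D_def d_def)
    have i1: "(u1 - u2) \<bullet> (r1 - r2) \<le> D * (Lr * d)"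
    proof -
      have "(u1 - u2) \<bullet> (r1 - r2) \<le> D * norm (r1 - r2)"
        unfolding D_def by (rule Cauchy_Schwarz_ineq2[THEN abs_le_D1])
      also have "\<dots> \<le> D * (Lr * d)" using er D0 by (rule mult_left_mono)
      finally show ?thesis .
    qed
    have i2: "m1 * (LG * d * D) \<le> M * (LG * d * D)"
      using m1M nn D0 d0 by (intro mult_right_mono) auto
    have i3: "\<bar>m1 - m2\<bar> * (Lc * d) \<le> (D + Lr * d + M * (LG * d + LGu * D)) * q * d"
    proof -
      have "\<bar>m1 - m2\<bar> * (Lc * d) \<le> (D + Lr * d + M * (LG * d + LGu * D)) / g0 * (Lc * d)"
        using mdiff2 nn d0 by (intro mult_right_mono) auto
      also have "\<dots> = (D + Lr * d + M * (LG * d + LGu * D)) * q * d" by (simp add: q_def)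
      finally show ?thesis .
    qed
    have "D^2 \<le> D * (Lr * d) + M * (LG * d * D) + (D + Lr * d + M * (LG * d + LGu * D)) * q * d"
      using DT Tle Tm i1 i2 i3 by linarith
    also have "\<dots> = A * D * d + B * d^2"
      by (simp add: A_def B_def power2_eq_square algebra_simps)
    finally have "D^2 \<le> A * D * d + B * d^2" .
    from quad_bound[OF D0 d0 A0 B0 this] show ?thesis by (simp add: D_def d_def u1_def u2_def)
  qed
  show ?thesis using main by blast
qed




lemma kkt_single:
  fixes c :: "real^'m \<Rightarrow> real" and G r u us :: "real^'m"
  assumes deriv: "\<And>d. ((\<lambda>t. c (u + t *\<^sub>R d)) has_real_derivative (G \<bullet> d)) (at 0)"
    and feas: "c u \<ge> 0"
    and opt: "\<And>v. c v \<ge> 0 \<Longrightarrow> norm (u - r) \<le> norm (v - r)"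
    and slater: "c us > 0" and conc: "c us \<le> c u + G \<bullet> (us - u)"
  shows "\<exists>\<mu>\<ge>0. u - r = \<mu> *\<^sub>R G \<and> \<mu> * c u = 0"
proof -
  define e where "e = u - r"
  have key: "e \<bullet> d \<ge> 0" if cond: "c u > 0 \<or> G \<bullet> d > 0" for d
  proof (rule ccontr)
    assume "\<not> e \<bullet> d \<ge> 0"
    hence ed: "e \<bullet> d < 0" by simp
    define \<phi> where "\<phi> t = e \<bullet> e + 2 * t * (e \<bullet> d) + t^2 * (d \<bullet> d)" for t :: real
    have \<phi>eq: "\<phi> t = (norm (u + t *\<^sub>R d - r))^2" for t
      unfolding \<phi>_def power2_norm_eq_inner e_def
      by (simp add: inner_add_left inner_add_right inner_diff_left inner_diff_right inner_commute power2_eq_square algebra_simps)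
    have "(\<phi> has_real_derivative (2 * (e \<bullet> d))) (at 0)"
      unfolding \<phi>_def by (auto intro!: derivative_eq_intros)
    from DERIV_neg_dec_right[OF this] ed obtain d1 where d1: "d1 > 0" "\<forall>h>0. h < d1 \<longrightarrow> \<phi> (0 + h) < \<phi> 0" by auto
    obtain d2 where d2: "d2 > 0" "\<forall>h>0. h < d2 \<longrightarrow> c (u + h *\<^sub>R d) \<ge> 0"
    proof (cases "c u > 0")
      case True
      have "isCont (\<lambda>t. c (u + t *\<^sub>R d)) 0" using deriv[of d] by (rule DERIV_isCont)
      then obtain dd where dd: "dd > 0" "\<forall>y. dist y 0 < dd \<longrightarrow> dist (c (u + y *\<^sub>R d)) (c (u + 0 *\<^sub>R d)) < c u"
        unfolding continuous_at_eps_delta using True by blast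
      have "\<forall>h>0. h < dd \<longrightarrow> c (u + h *\<^sub>R d) \<ge> 0"
      proof (intro allI impI)
        fix h :: real assume "h > 0" "h < dd"
        hence "dist (c (u + h *\<^sub>R d)) (c u) < c u" using dd(2) by (auto simp: dist_real_def)
        thus "c (u + h *\<^sub>R d) \<ge> 0" by (auto simp: dist_real_def)
      qed
      with dd(1) show ?thesis using that by blast
    next
      case False
      hence "G \<bullet> d > 0" using cond by simp
      from DERIV_pos_inc_right[OF deriv[of d] this] obtain dd where
        "dd > 0" "\<forall>h>0. h < dd \<longrightarrow> c (u + 0 *\<^sub>R d) < c (u + (0 + h) *\<^sub>R d)" by blast
      thus ?thesis using that feas by force
    qed
    define h where "h = min d1 d2 / 2"
    have h: "h > 0" "h < d1" "h < d2" using d1 d2 by (auto simp: h_def)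
    have "c (u + h *\<^sub>R d) \<ge> 0" using d2 h by auto
    hence "norm (u - r) \<le> norm (u + h *\<^sub>R d - r)" by (simp add: opt)
    hence "\<phi> 0 \<le> \<phi> h" unfolding \<phi>eq by simp
    moreover have "\<phi> h < \<phi> 0" using d1 h by auto
    ultimately show False by simp
  qed
  show ?thesis
  proof (cases "c u > 0")
    case True
    have "e \<bullet> (- e) \<ge> 0" using key True by blast
    hence "e = 0" by (metis inner_gt_zero_iff inner_minus_right neg_0_le_iff_le not_le)
    thus ?thesis using e_def by (intro exI[of _ 0]) auto
  next
    case False
    hence cu: "c u = 0" using feas by simp
    have "G \<bullet> (us - u) > 0" using slater conc cu by simp
    hence G0: "G \<noteq> 0" by auto
    hence GG: "G \<bullet> G > 0" by simp
    have eG: "e \<bullet> G \<ge> 0" using key[of G] GG by simp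
    define \<mu> where "\<mu> = (e \<bullet> G) / (G \<bullet> G)"
    define e' where "e' = e - \<mu> *\<^sub>R G"
    have e'G: "e' \<bullet> G = 0" using GG by (simp add: e'_def \<mu>_def inner_diff_left)
    have "e' = 0"
    proof (rule ccontr)
      assume "e' \<noteq> 0"
      hence pe: "e' \<bullet> e' > 0" by simp
      define s where "s = (e' \<bullet> e') / (2 * (e \<bullet> G) + 2)"
      have s0: "s > 0" using pe eG by (simp add: s_def)
      define d where "d = s *\<^sub>R G - e'"
      have "G \<bullet> d = s * (G \<bullet> G)" using e'G by (simp add: d_def inner_diff_right inner_commute)
      hence "G \<bullet> d > 0" using s0 GG by simp
      hence ged: "e \<bullet> d \<ge> 0" using key by blast
      have ee': "e \<bullet> e' = e' \<bullet> e'"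
        using e'G by (simp add: e'_def inner_diff_left inner_diff_right inner_commute)
      have "e \<bullet> d = s * (e \<bullet> G) - e' \<bullet> e'" using ee' by (simp add: d_def inner_diff_right)
      moreover have "s * (e \<bullet> G) < e' \<bullet> e'"
      proof -
        have "s * (e \<bullet> G) = (e' \<bullet> e') * ((e \<bullet> G) / (2 * (e \<bullet> G) + 2))" by (simp add: s_def)
        also have "\<dots> < (e' \<bullet> e') * 1"
          using pe eG by (intro mult_strict_left_mono) auto
        finally show ?thesis by simp
      qed
      ultimately show False using ged by simp
    qed
    hence "u - r = \<mu> *\<^sub>R G" by (simp add: e'_def e_def)
    moreover have "\<mu> \<ge> 0" using eG GG by (simp add: \<mu>_def)
    ultimately show ?thesis using cu by auto
  qed
qed

lemma exists_min:
  fixes c :: "real^'m \<Rightarrow> real"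
  assumes cont: "continuous_on UNIV c" and us: "c us \<ge> 0"
  shows "\<exists>u. c u \<ge> 0 \<and> (\<forall>v. c v \<ge> 0 \<longrightarrow> norm (u - r) \<le> norm (v - r))"
proof -
  define K where "K = {v. c v \<ge> 0} \<inter> cball r (norm (us - r))"
  have "closed {v. c v \<ge> 0}" using cont by (intro closed_Collect_le) (auto intro: continuous_intros)
  hence "compact K" unfolding K_def by (intro closed_Int_compact) auto
  moreover have "K \<noteq> {}" using us by (auto simp: K_def dist_norm norm_minus_commute)
  moreover have "continuous_on K (\<lambda>v. norm (v - r))" by (intro continuous_intros)
  ultimately obtain u where u: "u \<in> K" "\<forall>v\<in>K. norm (u - r) \<le> norm (v - r)"
    using continuous_attains_inf by blast
  have "norm (u - r) \<le> norm (v - r)" if "c v \<ge> 0" for v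
  proof (cases "v \<in> K")
    case True then show ?thesis using u by auto
  next
    case False
    hence "norm (v - r) > norm (us - r)" using that by (auto simp: K_def dist_norm norm_minus_commute)
    moreover have "norm (u - r) \<le> norm (us - r)" using u(1) by (auto simp: K_def dist_norm norm_minus_commute)
    ultimately show ?thesis by simp
  qed
  thus ?thesis using u(1) by (auto simp: K_def)
qed

lemma unique_min:
  fixes c :: "real^'m \<Rightarrow> real" and G :: "real^'m \<Rightarrow> real^'m"
  assumes conc: "\<And>a b. c b \<le> c a + G a \<bullet> (b - a)"
    and f1: "c u1 \<ge> 0" and o1: "\<forall>v. c v \<ge> 0 \<longrightarrow> norm (u1 - r) \<le> norm (v - r)"
    and f2: "c u2 \<ge> 0" and o2: "\<forall>v. c v \<ge> 0 \<longrightarrow> norm (u2 - r) \<le> norm (v - r)"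
  shows "u1 = u2"
proof (rule ccontr)
  assume ne: "u1 \<noteq> u2"
  define w where "w = (1/2) *\<^sub>R (u1 + u2)"
  have a1: "c u1 \<le> c w + G w \<bullet> (u1 - w)" and a2: "c u2 \<le> c w + G w \<bullet> (u2 - w)" using conc by auto
  have "(u1 - w) + (u2 - w) = 0" by (simp add: w_def vec_eq_iff field_simps)
  hence "G w \<bullet> (u1 - w) + G w \<bullet> (u2 - w) = 0" by (metis inner_add_right inner_zero_right)
  hence "c w \<ge> 0" using a1 a2 f1 f2 by linarith
  hence le: "norm (u1 - r) \<le> norm (w - r)" using o1 by blast
  have eq: "norm (u1 - r) = norm (u2 - r)" using o1 o2 f1 f2 by (simp add: order_antisym)
  have "(norm (w - r))^2 = ((norm (u1 - r))^2 + (norm (u2 - r))^2) / 2 - (norm (u1 - u2))^2 / 4"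
    unfolding power2_norm_eq_inner w_def
    by (simp add: inner_add_left inner_add_right inner_diff_left inner_diff_right inner_commute field_simps)
  also have "\<dots> < (norm (u1 - r))^2" using eq ne by simp
  finally have "norm (w - r) < norm (u1 - r)" by (simp add: power_less_imp_less_base)
  with le show False by simp
qed




lemma symm_inner:
  fixes M :: "real^'k^'k"
  assumes "transpose M = M"
  shows "w \<bullet> (M *v v) = v \<bullet> (M *v w)"
proof -
  have "w \<bullet> (M *v v) = (w v* M) \<bullet> v" by (simp add: dot_lmul_matrix)
  also have "w v* M = transpose M *v w" by simp
  also have "\<dots> = M *v w" using assms by simp
  finally show ?thesis by (simp add: inner_commute)
qed

lemma quad_nonneg_disc:
  fixes a b c :: real
  assumes "\<And>t. a + 2*t*b + t^2*c \<ge> 0" "c \<ge> 0"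
  shows "b^2 \<le> a * c"
proof (cases "c = 0")
  case True
  have "b = 0"
  proof (rule ccontr)
    assume "b \<noteq> 0"
    have "a + 2 * (-(a+1)/(2*b)) * b + (-(a+1)/(2*b))^2 * c \<ge> 0" by (rule assms(1))
    thus False using True \<open>b \<noteq> 0\<close> by (simp add: field_simps)
  qed
  thus ?thesis using True by simp
next
  case False
  hence c: "c > 0" using assms(2) by simp
  have "a + 2 * (-b/c) * b + (-b/c)^2 * c \<ge> 0" by (rule assms(1))
  hence "a - b^2 / c \<ge> 0" using c by (simp add: power2_eq_square field_simps)
  hence "b^2 / c \<le> a" by simp
  thus ?thesis using c by (simp add: divide_le_eq mult.commute)
qed

lemma quad_expand:
  fixes M :: "real^'k^'k"
  assumes "transpose M = M"
  shows "(v + t *\<^sub>R w) \<bullet> (M *v (v + t *\<^sub>R w)) = v \<bullet> (M *v v) + 2 * t * (v \<bullet> (M *v w)) + t^2 * (w \<bullet> (M *v w))"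
  using symm_inner[OF assms, of w v]
  by (simp add: matrix_vector_right_distrib matrix_vector_mult_scaleR inner_add_left inner_add_right power2_eq_square algebra_simps)

lemma psd_cs:
  fixes M :: "real^'k^'k"
  assumes sym: "transpose M = M" and psd: "\<And>z. z \<bullet> (M *v z) \<ge> 0"
  shows "(v \<bullet> (M *v w))^2 \<le> (v \<bullet> (M *v v)) * (w \<bullet> (M *v w))"
proof (rule quad_nonneg_disc)
  fix t :: real
  show "v \<bullet> (M *v v) + 2 * t * (v \<bullet> (M *v w)) + t^2 * (w \<bullet> (M *v w)) \<ge> 0"
    using psd[of "v + t *\<^sub>R w"] quad_expand[OF sym] by simp
qed (rule psd)

lemma psd_cs_sqrt:
  fixes M :: "real^'k^'k"
  assumes sym: "transpose M = M" and psd: "\<And>z. z \<bullet> (M *v z) \<ge> 0"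
  shows "v \<bullet> (M *v w) \<le> sqrt (v \<bullet> (M *v v)) * sqrt (w \<bullet> (M *v w))"
proof -
  have "v \<bullet> (M *v w) \<le> \<bar>v \<bullet> (M *v w)\<bar>" by simp
  also have "\<dots> = sqrt ((v \<bullet> (M *v w))^2)" by simp
  also have "\<dots> \<le> sqrt ((v \<bullet> (M *v v)) * (w \<bullet> (M *v w)))"
    using psd_cs[OF sym psd] by (rule real_sqrt_le_mono)
  also have "\<dots> = sqrt (v \<bullet> (M *v v)) * sqrt (w \<bullet> (M *v w))" by (simp add: real_sqrt_mult)
  finally show ?thesis .
qed

lemma psd_triangle:
  fixes M :: "real^'k^'k"
  assumes sym: "transpose M = M" and psd: "\<And>z. z \<bullet> (M *v z) \<ge> 0"
  shows "sqrt ((v + w) \<bullet> (M *v (v + w))) \<le> sqrt (v \<bullet> (M *v v)) + sqrt (w \<bullet> (M *v w))"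
proof -
  have e: "(v + w) \<bullet> (M *v (v + w)) = v \<bullet> (M *v v) + 2 * (v \<bullet> (M *v w)) + w \<bullet> (M *v w)"
    using quad_expand[OF sym, of v 1 w] by simp
  have "(v + w) \<bullet> (M *v (v + w)) \<le> (sqrt (v \<bullet> (M *v v)) + sqrt (w \<bullet> (M *v w)))^2"
    unfolding e using psd_cs_sqrt[OF sym psd, of v w] psd[of v] psd[of w]
    by (simp add: power2_sum)
  hence "sqrt ((v + w) \<bullet> (M *v (v + w))) \<le> sqrt ((sqrt (v \<bullet> (M *v v)) + sqrt (w \<bullet> (M *v w)))^2)"
    by (rule real_sqrt_le_mono)
  also have "\<dots> = sqrt (v \<bullet> (M *v v)) + sqrt (w \<bullet> (M *v w))"
    using psd[of v] psd[of w] by simp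
  finally show ?thesis .
qed

definition mnorm :: "real^'j^'i \<Rightarrow> real" where
  "mnorm A = (\<Sum>i\<in>UNIV. \<Sum>j\<in>UNIV. \<bar>A $ i $ j\<bar>)"

lemma mnorm_nonneg: "mnorm A \<ge> 0"
  unfolding mnorm_def by (intro sum_nonneg) auto

lemma norm_mv_le: "norm (A *v x) \<le> mnorm A * norm x"
proof -
  have "norm (A *v x) \<le> onorm ((*v) A) * norm x"
    by (rule onorm) simp
  also have "\<dots> \<le> mnorm A * norm x"
    unfolding mnorm_def by (intro mult_right_mono onorm_le_matrix_component_sum) auto
  finally show ?thesis .
qed

lemma quad_le_mnorm: "\<bar>w \<bullet> (A *v w)\<bar> \<le> mnorm A * (norm w)^2"
proof -
  have "\<bar>w \<bullet> (A *v w)\<bar> \<le> norm w * norm (A *v w)" by (rule Cauchy_Schwarz_ineq2)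
  also have "\<dots> \<le> norm w * (mnorm A * norm w)" by (intro mult_left_mono norm_mv_le) auto
  finally show ?thesis by (simp add: power2_eq_square mult_ac)
qed

lemma mnorm_entries_le:
  assumes "\<And>i j. \<bar>A $ i $ j\<bar> \<le> f i j"
  shows "mnorm A \<le> (\<Sum>i\<in>UNIV. \<Sum>j\<in>UNIV. f i j)"
  unfolding mnorm_def by (intro sum_mono assms)

lemma mnorm_triangle: "mnorm (A + B) \<le> mnorm A + mnorm B"
  unfolding mnorm_def by (simp add: sum.distrib[symmetric] abs_triangle_ineq sum_mono)

(* eigenvalues of symmetric matrices *)

lemma psd_zero_kernel:
  fixes N :: "real^'k^'k"
  assumes sym: "transpose N = N" and psd: "\<And>z. z \<bullet> (N *v z) \<ge> 0" and z: "v \<bullet> (N *v v) = 0"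
  shows "N *v v = 0"
proof -
  have "(v \<bullet> (N *v (N *v v)))^2 \<le> (v \<bullet> (N *v v)) * ((N *v v) \<bullet> (N *v (N *v v)))"
    by (rule psd_cs[OF sym psd])
  hence "v \<bullet> (N *v (N *v v)) = 0" using z by simp
  hence "(N *v v) \<bullet> (N *v v) = 0" using symm_inner[OF sym, of v "N *v v"] by simp
  thus ?thesis by simp
qed

lemma symm_eigen_exists:
  fixes M :: "real^'k^'k"
  assumes sym: "transpose M = M"
  shows "\<exists>l. is_eigenvalue M l"
proof -
  define f where "f v = v \<bullet> (M *v v)" for v :: "real^'k"
  have "continuous_on (sphere 0 1) f" unfolding f_def
    by (intro continuous_intros linear_continuous_on) (auto intro: bounded_linear_intros)
  moreover have "sphere (0::real^'k) 1 \<noteq> {}"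
  proof -
    obtain i :: 'k where True by simp
    have "axis i 1 \<in> sphere (0::real^'k) 1" by (simp add: norm_axis_1)
    thus ?thesis by blast
  qed
  ultimately obtain v0 where v0: "v0 \<in> sphere 0 1" "\<forall>v\<in>sphere 0 1. f v0 \<le> f v"
    using continuous_attains_inf[OF compact_sphere] by blast
  define l where "l = f v0"
  define N where "N = M - l *\<^sub>R mat 1"
  have Nv: "N *v v = M *v v - l *\<^sub>R v" for v
    by (simp add: N_def matrix_vector_mult_diff_rdistrib scaleR_matrix_vector_assoc[symmetric])
  have symN: "transpose N = N"
    using sym by (simp add: N_def transpose_def vec_eq_iff mat_def)
  have psdN: "z \<bullet> (N *v z) \<ge> 0" for z
  proof (cases "z = 0")
    case True then show ?thesis by simp
  next
    case False
    define u where "u = z /\<^sub>R norm z"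
    have "u \<in> sphere 0 1" using False by (simp add: u_def)
    hence "l \<le> f u" using v0 by (simp add: l_def)
    hence "0 \<le> u \<bullet> (M *v u) - l * (u \<bullet> u)"
      using \<open>u \<in> sphere 0 1\<close> by (simp add: f_def dot_square_norm)
    hence "0 \<le> (norm z)^2 * (u \<bullet> (M *v u) - l * (u \<bullet> u))" by simp
    also have "\<dots> = z \<bullet> (M *v z) - l * (z \<bullet> z)"
      using False by (simp add: u_def matrix_vector_mult_scaleR power2_eq_square field_simps)
    finally show ?thesis by (simp add: Nv inner_diff_right)
  qed
  have "v0 \<bullet> (N *v v0) = 0"
    using v0(1) by (simp add: Nv inner_diff_right l_def f_def dot_square_norm)
  hence "N *v v0 = 0" by (rule psd_zero_kernel[OF symN psdN])
  hence "M *v v0 = l *\<^sub>R v0" by (simp add: Nv)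
  moreover have "v0 \<noteq> 0" using v0(1) by auto
  ultimately show ?thesis unfolding is_eigenvalue_def by blast
qed

lemma symm_eigen_finite:
  fixes M :: "real^'k^'k"
  assumes sym: "transpose M = M"
  shows "finite {l. is_eigenvalue M l}"
proof -
  define E where "E = {l. is_eigenvalue M l}"
  define ev where "ev l = (SOME v. v \<noteq> 0 \<and> M *v v = l *\<^sub>R v)" for l
  have ev: "ev l \<noteq> 0 \<and> M *v ev l = l *\<^sub>R ev l" if "l \<in> E" for l
  proof -
    from that obtain v where "v \<noteq> 0 \<and> M *v v = l *\<^sub>R v" unfolding E_def is_eigenvalue_def by auto
    thus ?thesis unfolding ev_def by (rule someI)
  qed
  have orth: "ev l1 \<bullet> ev l2 = 0" if "l1 \<in> E" "l2 \<in> E" "l1 \<noteq> l2" for l1 l2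
  proof -
    have "ev l1 \<bullet> (M *v ev l2) = ev l2 \<bullet> (M *v ev l1)" by (rule symm_inner[OF sym])
    hence "l2 * (ev l1 \<bullet> ev l2) = l1 * (ev l1 \<bullet> ev l2)"
      using ev[OF that(1)] ev[OF that(2)] by (simp add: inner_commute)
    thus ?thesis using that(3) by simp
  qed
  have inj: "inj_on ev E"
  proof (rule inj_onI)
    fix l1 l2 assume "l1 \<in> E" "l2 \<in> E" "ev l1 = ev l2"
    thus "l1 = l2" using orth ev by (metis inner_eq_zero_iff)
  qed
  have "pairwise orthogonal (ev ` E)"
    unfolding pairwise_def orthogonal_def using orth by auto
  moreover have "0 \<notin> ev ` E" using ev by auto
  ultimately have "independent (ev ` E)" by (rule pairwise_orthogonal_independent)
  hence "finite (ev ` E)" by (rule finiteI_independent)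
  thus ?thesis using inj finite_imageD E_def by blast
qed

lemma min_eigen_neg:
  fixes M :: "real^'k^'k"
  assumes sym: "transpose M = M" and neg: "min_eigenvalue M < 0"
  shows "\<exists>v. v \<bullet> (M *v v) < 0"
proof -
  have "min_eigenvalue M \<in> {l. is_eigenvalue M l}"
    unfolding min_eigenvalue_def using symm_eigen_finite[OF sym] symm_eigen_exists[OF sym]
    by (intro Min_in) auto
  then obtain v where v: "v \<noteq> 0" "M *v v = min_eigenvalue M *\<^sub>R v" unfolding is_eigenvalue_def by auto
  have "v \<bullet> (M *v v) = min_eigenvalue M * (v \<bullet> v)" using v by simp
  also have "\<dots> < 0" using v neg by (simp add: mult_neg_pos)
  finally show ?thesis by blast
qed




definition emb :: "real^'m \<Rightarrow> real^('m option)" where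
  "emb d = (\<chi> i. case i of None \<Rightarrow> 0 | Some j \<Rightarrow> d $ j)"

definition sub :: "real^('m option) \<Rightarrow> real^'m" where
  "sub v = (\<chi> j. v $ Some j)"

lemma sum_option: "(\<Sum>i\<in>(UNIV::'m::finite option set). f i) = f None + (\<Sum>j\<in>UNIV. f (Some j))"
proof -
  have "(UNIV::'m option set) = insert None (Some ` UNIV)" by (rule UNIV_option_conv)
  hence "(\<Sum>i\<in>(UNIV::'m option set). f i) = (\<Sum>i\<in>insert None (Some ` UNIV). f i)" by simp
  also have "\<dots> = f None + (\<Sum>i\<in>Some ` UNIV. f i)" by (subst sum.insert) auto
  also have "(\<Sum>i\<in>Some ` (UNIV::'m set). f i) = (\<Sum>j\<in>UNIV. f (Some j))"
    by (subst sum.reindex) (auto simp: inj_on_def)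
  finally show ?thesis .
qed

lemma inner_option: "(v::real^('m::finite option)) \<bullet> w = v $ None * w $ None + sub v \<bullet> sub w"
  unfolding inner_vec_def sub_def by (simp add: sum_option)

lemma aug_None [simp]: "aug u $ None = 1" and aug_Some [simp]: "aug u $ Some j = u $ j"
  by (simp_all add: aug_def)

lemma emb_None [simp]: "emb d $ None = 0" and emb_Some [simp]: "emb d $ Some j = d $ j"
  by (simp_all add: emb_def)

lemma sub_aug [simp]: "sub (aug u) = u" and sub_emb [simp]: "sub (emb d) = d"
  by (simp_all add: sub_def vec_eq_iff)

lemma sub_Some [simp]: "sub v $ j = v $ Some j" by (simp add: sub_def)

lemma aug_add: "aug (u + t *\<^sub>R d) = aug u + t *\<^sub>R emb d"
  unfolding vec_eq_iff by (auto split: option.splits simp: aug_def emb_def)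

lemma aug_diff: "aug a - aug b = emb (a - b)"
  unfolding vec_eq_iff by (auto split: option.splits simp: aug_def emb_def)

lemma emb_scale: "emb (t *\<^sub>R d) = t *\<^sub>R emb d"
  unfolding vec_eq_iff by (auto split: option.splits simp: emb_def)

lemma emb_minus: "emb (- d) = - emb d"
  unfolding vec_eq_iff by (auto split: option.splits simp: emb_def)

lemma aug_eq: "aug u = axis None 1 + emb u"
  unfolding vec_eq_iff by (auto split: option.splits simp: aug_def emb_def axis_def)

lemma inner_emb: "v \<bullet> emb d = sub v \<bullet> d"
  by (simp add: inner_option)

lemma inner_aug: "v \<bullet> aug u = v $ None + sub v \<bullet> u"
  by (simp add: inner_option)

lemma norm_emb [simp]: "norm (emb d) = norm d"
proof -
  have "emb d \<bullet> emb d = d \<bullet> d" by (simp add: inner_emb)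
  thus ?thesis by (simp add: norm_eq_sqrt_inner)
qed

lemma norm_aug_sq: "(norm (aug u))^2 = 1 + (norm u)^2"
  by (simp add: power2_norm_eq_inner inner_option)

lemma norm_aug_ge1: "norm (aug u) \<ge> 1"
proof -
  have "1 \<le> (norm (aug u))^2" using norm_aug_sq[of u] by simp
  hence "sqrt 1 \<le> sqrt ((norm (aug u))^2)" by (rule real_sqrt_le_mono)
  thus ?thesis by simp
qed

lemma norm_aug_le:
  fixes u :: "real^'m"
  shows "norm (aug u) \<le> 1 + norm u"
proof -
  have "norm (aug u) \<le> norm (axis (None::'m option) (1::real)) + norm (emb u)"
    using norm_triangle_ineq[of "axis (None::'m option) (1::real)" "emb u"] by (simp only: aug_eq)
  thus ?thesis by (simp add: norm_axis_1)
qed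

lemma aug_nonzero: "aug u \<noteq> 0"
  by (metis aug_None zero_index zero_neq_one)

lemma norm_sub_le: "norm (sub v) \<le> norm v"
proof -
  have "(norm (sub v))^2 = v \<bullet> emb (sub v)" by (simp add: inner_emb power2_norm_eq_inner)
  also have "\<dots> \<le> norm v * norm (sub v)" using Cauchy_Schwarz_ineq2[of v "emb (sub v)"] by simp
  finally have "norm (sub v) * norm (sub v) \<le> norm v * norm (sub v)" by (simp add: power2_eq_square)
  thus ?thesis by (cases "norm (sub v) = 0") (auto simp: mult_le_cancel_right)
qed

(* symmetry of the posterior covariance *)

lemma fiber_sum:
  fixes x :: "'j \<Rightarrow> 'p" and c :: "'j \<Rightarrow> real" and h :: "'p \<Rightarrow> real"
  assumes "finite J"
  shows "(\<Sum>p\<in>x ` J. (\<Sum>j\<in>{j\<in>J. x j = p}. c j) * h p) = (\<Sum>j\<in>J. c j * h (x j))"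
proof -
  have "(\<Sum>j\<in>J. c j * h (x j)) = (\<Sum>p\<in>x ` J. \<Sum>j\<in>{j\<in>J. x j = p}. c j * h (x j))"
    using assms by (rule sum.image_gen)
  also have "\<dots> = (\<Sum>p\<in>x ` J. \<Sum>j\<in>{j\<in>J. x j = p}. c j * h p)"
    by (intro sum.cong refl) auto
  also have "\<dots> = (\<Sum>p\<in>x ` J. (\<Sum>j\<in>{j\<in>J. x j = p}. c j) * h p)"
    by (simp add: sum_distrib_right)
  finally show ?thesis by simp
qed

lemma kernel_psd_sum:
  assumes k: "psd_kernel k" and J: "finite J"
  shows "(\<Sum>j\<in>J. \<Sum>l\<in>J. c j * c l * k (x j) (x l)) \<ge> 0"
proof -
  define C where "C p = (\<Sum>j\<in>{j\<in>J. x j = p}. c j)" for p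
  have F: "finite (x ` J)" using J by simp
  have "(\<Sum>p\<in>x ` J. \<Sum>q\<in>x ` J. C p * C q * k p q) \<ge> 0"
    using k F unfolding psd_kernel_def by blast
  also have "(\<Sum>p\<in>x ` J. \<Sum>q\<in>x ` J. C p * C q * k p q) = (\<Sum>p\<in>x ` J. C p * (\<Sum>q\<in>x ` J. C q * k p q))"
    by (simp add: sum_distrib_left mult_ac)
  also have "\<dots> = (\<Sum>j\<in>J. c j * (\<Sum>q\<in>x ` J. C q * k (x j) q))"
    unfolding C_def by (rule fiber_sum[OF J])
  also have "\<dots> = (\<Sum>j\<in>J. c j * (\<Sum>l\<in>J. c l * k (x j) (x l)))"
    unfolding C_def using fiber_sum[OF J, where x=x and c=c] by simp
  also have "\<dots> = (\<Sum>j\<in>J. \<Sum>l\<in>J. c j * c l * k (x j) (x l))"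
    by (simp add: sum_distrib_left mult_ac)
  finally show ?thesis .
qed

lemma gram_sym:
  assumes "\<forall>i. psd_kernel (k i)"
  shows "transpose (gram_c k xs us) = gram_c k xs us"
  using assms unfolding psd_kernel_def gram_c_def transpose_def
  by (simp add: vec_eq_iff mult_ac)

lemma gram_psd:
  assumes ker: "\<forall>i. psd_kernel (k i)"
  shows "v \<bullet> (gram_c k xs us *v v) \<ge> 0"
proof -
  have "v \<bullet> (gram_c k xs us *v v) =
      (\<Sum>j\<in>UNIV. \<Sum>l\<in>UNIV. \<Sum>i\<in>UNIV. (v $ j * aug (us j) $ i) * (v $ l * aug (us l) $ i) * k i (xs j) (xs l))"
    unfolding inner_vec_def matrix_vector_mult_def gram_c_def
    by (simp add: sum_distrib_left sum_distrib_right mult_ac)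
  also have "\<dots> = (\<Sum>j\<in>UNIV. \<Sum>i\<in>UNIV. \<Sum>l\<in>UNIV. (v $ j * aug (us j) $ i) * (v $ l * aug (us l) $ i) * k i (xs j) (xs l))"
    by (intro sum.cong refl sum.swap)
  also have "\<dots> = (\<Sum>i\<in>UNIV. \<Sum>j\<in>UNIV. \<Sum>l\<in>UNIV. (v $ j * aug (us j) $ i) * (v $ l * aug (us l) $ i) * k i (xs j) (xs l))"
    by (rule sum.swap)
  also have "\<dots> \<ge> 0"
    using ker by (intro sum_nonneg kernel_psd_sum) auto
  finally show ?thesis .
qed

lemma invertible_of_pd:
  fixes A :: "real^'N^'N"
  assumes pd: "\<And>v. v \<noteq> 0 \<Longrightarrow> v \<bullet> (A *v v) > 0"
  shows "invertible A"
proof -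
  have "inj ((*v) A)"
  proof (rule injI)
    fix a b assume "A *v a = A *v b"
    hence "A *v (a - b) = 0" by (simp add: matrix_vector_mult_diff_distrib)
    hence "(a - b) \<bullet> (A *v (a - b)) = 0" by simp
    thus "a = b" using pd[of "a - b"] by (cases "a - b = 0") auto
  qed
  thus ?thesis using invertible_left_inverse matrix_left_invertible_injective by blast
qed

lemma matrix_inv_sym:
  fixes A :: "real^'N^'N"
  assumes inv: "invertible A" and sym: "transpose A = A"
  shows "transpose (matrix_inv A) = matrix_inv A"
proof -
  define B where "B = matrix_inv A"
  have AB: "A ** B = mat 1" and BA: "B ** A = mat 1"
    using inv unfolding B_def matrix_inv_def invertible_def by (metis (mono_tags, lifting) someI_ex)+
  have "transpose B ** A = mat 1"
    using AB sym by (metis matrix_transpose_mul transpose_mat)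
  hence "transpose B = transpose B ** (A ** B)" using AB by simp
  also have "\<dots> = (transpose B ** A) ** B" by (simp add: matrix_mul_assoc)
  also have "\<dots> = B" using \<open>transpose B ** A = mat 1\<close> by simp
  finally show ?thesis by (simp add: B_def)
qed

lemma tdiff: "transpose (P - Q) = transpose P - transpose (Q::real^'a^'b)"
  by (simp add: transpose_def vec_eq_iff)

lemma Sigma_sym:
  assumes ker: "\<forall>i. psd_kernel (k i)" and sn: "sn > 0"
  shows "transpose (Sigma_B k sn xs us y) = Sigma_B k sn xs us y"
proof -
  define A where "A = gram_c k xs us + (sn\<^sup>2) *\<^sub>R mat 1"
  have symA: "transpose A = A"
  proof -
    have "gram_c k xs us $ a $ b = gram_c k xs us $ b $ a" for a b
      using gram_sym[OF ker, of xs us] unfolding transpose_def vec_eq_iff by auto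
    thus ?thesis by (simp add: A_def transpose_def vec_eq_iff mat_def)
  qed
  have "v \<bullet> (A *v v) > 0" if "v \<noteq> 0" for v
  proof -
    have "v \<bullet> (A *v v) = v \<bullet> (gram_c k xs us *v v) + sn\<^sup>2 * (v \<bullet> v)"
      by (simp add: A_def matrix_vector_mult_add_rdistrib scaleR_matrix_vector_assoc[symmetric] inner_add_right)
    moreover have "sn\<^sup>2 * (v \<bullet> v) > 0" using sn that by simp
    ultimately show ?thesis using gram_psd[OF ker, of v xs us] by linarith
  qed
  hence "invertible A" by (rule invertible_of_pd)
  hence symI: "transpose (matrix_inv A) = matrix_inv A" using symA by (rule matrix_inv_sym)
  have symK: "transpose (K_starstar k y) = K_starstar k y"
    by (simp add: K_starstar_def transpose_def vec_eq_iff)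
  show ?thesis
    unfolding Sigma_B_def A_def[symmetric]
    by (simp add: tdiff matrix_transpose_mul symI symK matrix_mul_assoc)
qed




definition qf :: "real^'k^'k \<Rightarrow> real^'k \<Rightarrow> real" where
  "qf S w = w \<bullet> (S *v w)"

definition cfun :: "real \<Rightarrow> real \<Rightarrow> real^'m \<Rightarrow> real^('m option)^('m option) \<Rightarrow> real^'m \<Rightarrow> real" where
  "cfun \<beta> a p S u = a + p \<bullet> u - \<beta> * sqrt (qf S (aug u))"

definition Gfun :: "real \<Rightarrow> real^'m \<Rightarrow> real^('m option)^('m option) \<Rightarrow> real^'m \<Rightarrow> real^'m" where
  "Gfun \<beta> p S u = p - (\<beta> / sqrt (qf S (aug u))) *\<^sub>R sub (S *v aug u)"

lemma bounded_linear_emb: "bounded_linear (emb :: real^'m \<Rightarrow> real^('m option))"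
proof (rule bounded_linear_intro[where K=1])
  show "emb (x + y) = emb x + emb y" for x y :: "real^'m"
    unfolding vec_eq_iff by (auto split: option.splits simp: emb_def)
  show "emb (r *\<^sub>R x) = r *\<^sub>R emb x" for r and x :: "real^'m" by (rule emb_scale)
  show "norm (emb x) \<le> norm x * 1" for x :: "real^'m" by simp
qed

lemma continuous_aug: "continuous_on UNIV (aug :: real^'m \<Rightarrow> real^('m option))"
proof -
  have "continuous_on UNIV (\<lambda>u::real^'m. axis None 1 + emb u)"
    by (intro continuous_intros linear_continuous_on bounded_linear_emb)
  thus ?thesis by (simp add: aug_eq[abs_def])
qed

lemma continuous_cfun:
  fixes S :: "real^('m::finite option)^('m option)"
  shows "continuous_on UNIV (cfun \<beta> a p S)"
proof -
  have c1: "continuous_on UNIV (\<lambda>w::real^('m option). sqrt (w \<bullet> (S *v w)))"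
    by (intro continuous_intros linear_continuous_on) auto
  have c2: "continuous_on UNIV (\<lambda>u::real^'m. sqrt (aug u \<bullet> (S *v aug u)))"
    using continuous_on_compose2[OF c1 continuous_aug] by auto
  have "continuous_on UNIV (\<lambda>u. a + p \<bullet> u - \<beta> * sqrt (aug u \<bullet> (S *v aug u)))"
    by (intro continuous_intros c2)
  thus ?thesis by (simp add: cfun_def[abs_def] qf_def)
qed

lemma cfun_deriv:
  assumes sym: "transpose S = S" and pos: "qf S (aug u) > 0"
  shows "((\<lambda>t. cfun \<beta> a p S (u + t *\<^sub>R d)) has_real_derivative (Gfun \<beta> p S u \<bullet> d)) (at 0)"
proof -
  define Q0 where "Q0 = qf S (aug u)"
  define b where "b = aug u \<bullet> (S *v emb d)"
  define c2 where "c2 = qf S (emb d)"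
  have eq: "cfun \<beta> a p S (u + t *\<^sub>R d) = a + p \<bullet> u + t * (p \<bullet> d) - \<beta> * sqrt (Q0 + 2 * t * b + t^2 * c2)" for t
    unfolding cfun_def qf_def Q0_def b_def c2_def aug_add quad_expand[OF sym]
    by (simp add: inner_add_right)
  have Q0p: "Q0 > 0" using pos by (simp add: Q0_def)
  have d1: "((\<lambda>t. Q0 + 2 * t * b + t^2 * c2) has_real_derivative (2 * b)) (at 0)"
    by (auto intro!: derivative_eq_intros)
  have d2: "((\<lambda>t. sqrt (Q0 + 2 * t * b + t^2 * c2)) has_real_derivative (inverse (sqrt Q0) / 2 * (2 * b))) (at 0)"
    using DERIV_chain2[OF DERIV_real_sqrt[of "Q0 + 2 * 0 * b + 0^2 * c2"] d1] Q0p by simp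
  have d3: "((\<lambda>t. t * (p \<bullet> d)) has_real_derivative (1 * (p \<bullet> d))) (at 0)"
    by (rule DERIV_cmult_right[OF DERIV_ident])
  have der: "((\<lambda>t. a + p \<bullet> u + t * (p \<bullet> d) - \<beta> * sqrt (Q0 + 2 * t * b + t^2 * c2)) has_real_derivative
        (0 + 1 * (p \<bullet> d) - \<beta> * (inverse (sqrt Q0) / 2 * (2 * b)))) (at 0)"
    by (rule DERIV_diff[OF DERIV_add[OF DERIV_const d3] DERIV_cmult[OF d2]])
  have sb: "sub (S *v aug u) \<bullet> d = b"
    unfolding b_def using inner_emb[of "S *v aug u" d] symm_inner[OF sym, of "aug u" "emb d"]
      inner_commute[of "S *v aug u" "emb d"] by linarith
  have X: "(0 + 1 * (p \<bullet> d) - \<beta> * (inverse (sqrt Q0) / 2 * (2 * b))) = Gfun \<beta> p S u \<bullet> d"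
  proof -
    have "Gfun \<beta> p S u \<bullet> d = p \<bullet> d - (\<beta> / sqrt Q0) * (sub (S *v aug u) \<bullet> d)"
      unfolding Gfun_def Q0_def by (simp only: inner_diff_left inner_scaleR_left)
    also have "\<dots> = p \<bullet> d - (\<beta> / sqrt Q0) * b" by (simp only: sb)
    also have "\<dots> = 0 + 1 * (p \<bullet> d) - \<beta> * (b / sqrt Q0)" by simp
    also have "b / sqrt Q0 = inverse (sqrt Q0) / 2 * (2 * b)" by (simp add: field_simps)
    finally show ?thesis by simp
  qed
  have fe: "(\<lambda>t. cfun \<beta> a p S (u + t *\<^sub>R d)) = (\<lambda>t. a + p \<bullet> u + t * (p \<bullet> d) - \<beta> * sqrt (Q0 + 2 * t * b + t^2 * c2))"
    by (rule ext) (rule eq)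
  show ?thesis unfolding fe using der unfolding X .
qed

lemma cfun_conc:
  assumes sym: "transpose S = S" and pd: "\<And>w. w \<noteq> 0 \<Longrightarrow> qf S w > 0" and \<beta>: "\<beta> \<ge> 0"
  shows "cfun \<beta> a p S v \<le> cfun \<beta> a p S u + Gfun \<beta> p S u \<bullet> (v - u)"
proof -
  have psd: "z \<bullet> (S *v z) \<ge> 0" for z using pd[of z] by (cases "z = 0") (auto simp: qf_def)
  define wa wb where "wa = aug u" and "wb = aug v"
  define qa qb where "qa = qf S wa" and "qb = qf S wb"
  have qa: "qa > 0" using pd[OF aug_nonzero] by (simp add: qa_def wa_def)
  have "sub (S *v wa) \<bullet> (v - u) = (S *v wa) \<bullet> emb (v - u)" by (simp add: inner_emb)
  also have "\<dots> = (S *v wa) \<bullet> (wb - wa)" by (simp add: wa_def wb_def aug_diff)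
  also have "\<dots> = wb \<bullet> (S *v wa) - qa"
    using inner_diff_right[of "S *v wa" wb wa] inner_commute[of "S *v wa" wb] inner_commute[of "S *v wa" wa]
    unfolding qa_def qf_def by linarith
  finally have zi: "sub (S *v wa) \<bullet> (v - u) = wb \<bullet> (S *v wa) - qa" .
  have cs: "wb \<bullet> (S *v wa) \<le> sqrt qb * sqrt qa"
    using psd_cs_sqrt[OF sym psd, of wb wa] by (simp add: qa_def qb_def qf_def)
  have sq: "sqrt qa * sqrt qa = qa" using qa by simp
  have Gd: "Gfun \<beta> p S u \<bullet> (v - u) = p \<bullet> (v - u) - \<beta> / sqrt qa * (wb \<bullet> (S *v wa) - qa)"
  proof -
    have "Gfun \<beta> p S u = p - (\<beta> / sqrt qa) *\<^sub>R sub (S *v wa)" by (simp add: Gfun_def qa_def wa_def)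
    hence "Gfun \<beta> p S u \<bullet> (v - u) = p \<bullet> (v - u) - (\<beta> / sqrt qa) * (sub (S *v wa) \<bullet> (v - u))"
      by (simp only: inner_diff_left inner_scaleR_left)
    thus ?thesis unfolding zi .
  qed
  have dq: "\<beta> / sqrt qa * (wb \<bullet> (S *v wa) - qa) = \<beta> * ((wb \<bullet> (S *v wa)) / sqrt qa) - \<beta> * sqrt qa"
  proof -
    have "\<beta> / sqrt qa * (wb \<bullet> (S *v wa) - qa) = \<beta> * ((wb \<bullet> (S *v wa)) / sqrt qa) - \<beta> * (qa / sqrt qa)"
      by (simp add: right_diff_distrib divide_inverse mult_ac)
    also have "qa / sqrt qa = sqrt qa" using qa by (simp add: real_div_sqrt)
    finally show ?thesis .
  qed
  have cu: "cfun \<beta> a p S u = a + p \<bullet> u - \<beta> * sqrt qa" by (simp add: cfun_def qa_def wa_def)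
  have cv: "cfun \<beta> a p S v = a + p \<bullet> v - \<beta> * sqrt qb" by (simp add: cfun_def qb_def wb_def)
  have "(wb \<bullet> (S *v wa)) / sqrt qa \<le> sqrt qb"
    using cs qa by (simp add: divide_le_eq)
  hence "\<beta> * ((wb \<bullet> (S *v wa)) / sqrt qa) \<le> \<beta> * sqrt qb" using \<beta> by (rule mult_left_mono)
  moreover have "p \<bullet> (v - u) = p \<bullet> v - p \<bullet> u" by (rule inner_diff_right)
  ultimately show ?thesis unfolding cu cv Gd dq by linarith
qed




lemma sqrt_diff_le:
  fixes a b l :: real
  assumes "a \<ge> l" "b \<ge> l" "l > 0"
  shows "\<bar>sqrt a - sqrt b\<bar> \<le> \<bar>a - b\<bar> / sqrt l"
proof -
  have sa: "sqrt a \<ge> sqrt l" and sb: "sqrt b \<ge> sqrt l" using assms by (auto intro: real_sqrt_le_mono)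
  have sl: "sqrt l > 0" using assms by simp
  have pos: "sqrt a + sqrt b > 0" using sa sb sl by linarith
  have "(sqrt a - sqrt b) * (sqrt a + sqrt b) = a - b"
    using assms by (simp add: algebra_simps)
  hence "\<bar>sqrt a - sqrt b\<bar> * (sqrt a + sqrt b) = \<bar>a - b\<bar>"
    using pos by (metis abs_mult abs_of_pos)
  hence eq: "\<bar>sqrt a - sqrt b\<bar> = \<bar>a - b\<bar> / (sqrt a + sqrt b)" using pos by (simp add: eq_divide_eq)
  have "\<bar>a - b\<bar> / (sqrt a + sqrt b) \<le> \<bar>a - b\<bar> / sqrt l"
  proof (rule divide_left_mono)
    show "sqrt l \<le> sqrt a + sqrt b" using sa sb sl by linarith
  qed (use pos sl in \<open>auto intro: mult_pos_pos\<close>)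
  thus ?thesis using eq by simp
qed

lemma inv_sqrt_diff_le:
  fixes a b l :: real
  assumes "a \<ge> l" "b \<ge> l" "l > 0"
  shows "\<bar>1 / sqrt a - 1 / sqrt b\<bar> \<le> \<bar>a - b\<bar> / (l * sqrt l)"
proof -
  have sa: "sqrt a \<ge> sqrt l" and sb: "sqrt b \<ge> sqrt l" using assms by (auto intro: real_sqrt_le_mono)
  have sl: "sqrt l > 0" using assms by simp
  have pa: "sqrt a > 0" and pb: "sqrt b > 0" using sa sb sl by linarith+
  have "1 / sqrt a - 1 / sqrt b = (sqrt b - sqrt a) / (sqrt a * sqrt b)"
    using pa pb by (simp add: field_simps)
  hence "\<bar>1 / sqrt a - 1 / sqrt b\<bar> = \<bar>sqrt b - sqrt a\<bar> / (sqrt a * sqrt b)"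
    using pa pb by (simp add: abs_mult)
  also have "\<dots> \<le> (\<bar>b - a\<bar> / sqrt l) / (sqrt a * sqrt b)"
    using sqrt_diff_le[OF assms(2,1,3)] pa pb by (intro divide_right_mono) auto
  also have "\<dots> \<le> (\<bar>b - a\<bar> / sqrt l) / l"
  proof (rule divide_left_mono)
    have "sqrt a * sqrt b \<ge> sqrt l * sqrt l" using sa sb sl by (intro mult_mono) auto
    thus "l \<le> sqrt a * sqrt b" using assms by simp
  qed (use assms sl in auto)
  also have "\<dots> = \<bar>a - b\<bar> / (l * sqrt l)" by (simp add: abs_minus_commute mult.commute)
  finally show ?thesis .
qed

lemma sub_diff: "sub v - sub w = sub (v - w)"
  by (simp add: sub_def vec_eq_iff)

lemma qf_diff_mat: "qf S1 w - qf S2 w = qf (S1 - S2) w"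
  by (simp add: qf_def matrix_vector_mult_diff_rdistrib inner_diff_right)

lemma qf_bound: "\<bar>qf S w\<bar> \<le> mnorm S * (norm w)^2"
  unfolding qf_def by (rule quad_le_mnorm)

lemma Gfun_diff:
  assumes q1: "qf S1 (aug u1) \<ge> l" and q2: "qf S2 (aug u2) \<ge> l" and l: "l > 0" and \<beta>: "\<beta> \<ge> 0"
  shows "norm (Gfun \<beta> p1 S1 u1 - Gfun \<beta> p2 S2 u2) \<le> norm (p1 - p2) +
     \<beta> * (\<bar>qf S1 (aug u1) - qf S2 (aug u2)\<bar> / (l * sqrt l) * norm (S1 *v aug u1)
        + norm (S1 *v aug u1 - S2 *v aug u2) / sqrt l)"
proof -
  define Q1 Q2 where "Q1 = qf S1 (aug u1)" and "Q2 = qf S2 (aug u2)"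
  define V1 V2 where "V1 = S1 *v aug u1" and "V2 = S2 *v aug u2"
  define s1 s2 where "s1 = \<beta> / sqrt Q1" and "s2 = \<beta> / sqrt Q2"
  have G: "Gfun \<beta> p1 S1 u1 - Gfun \<beta> p2 S2 u2 = (p1 - p2) - ((s1 - s2) *\<^sub>R sub V1 + s2 *\<^sub>R sub (V1 - V2))"
    by (simp add: Gfun_def s1_def s2_def Q1_def Q2_def V1_def V2_def sub_diff[symmetric] algebra_simps)
  have n1: "norm (sub V1) \<le> norm V1" and n2: "norm (sub (V1 - V2)) \<le> norm (V1 - V2)" by (rule norm_sub_le)+
  have sl: "sqrt l > 0" using l by simp
  have sQ2: "sqrt Q2 \<ge> sqrt l" using q2 by (simp add: Q2_def real_sqrt_le_mono)
  have ds: "\<bar>s1 - s2\<bar> \<le> \<beta> * (\<bar>Q1 - Q2\<bar> / (l * sqrt l))"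
  proof -
    have "s1 - s2 = \<beta> * (1 / sqrt Q1 - 1 / sqrt Q2)" by (simp add: s1_def s2_def right_diff_distrib)
    hence "\<bar>s1 - s2\<bar> = \<beta> * \<bar>1 / sqrt Q1 - 1 / sqrt Q2\<bar>" using \<beta> by (simp add: abs_mult)
    also have "\<dots> \<le> \<beta> * (\<bar>Q1 - Q2\<bar> / (l * sqrt l))"
      using inv_sqrt_diff_le[of l Q1 Q2] q1 q2 l \<beta> by (intro mult_left_mono) (auto simp: Q1_def Q2_def)
    finally show ?thesis .
  qed
  have s2b: "0 \<le> s2" "s2 \<le> \<beta> / sqrt l"
    using \<beta> sQ2 sl by (auto simp: s2_def intro: divide_left_mono)
  have "norm (Gfun \<beta> p1 S1 u1 - Gfun \<beta> p2 S2 u2) \<le> norm (p1 - p2) + (norm ((s1 - s2) *\<^sub>R sub V1) + norm (s2 *\<^sub>R sub (V1 - V2)))"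
    unfolding G by (meson norm_triangle_ineq4 norm_triangle_ineq order_trans add_left_mono)
  also have "norm ((s1 - s2) *\<^sub>R sub V1) \<le> \<beta> * (\<bar>Q1 - Q2\<bar> / (l * sqrt l)) * norm V1"
    using ds n1 by (simp only: norm_scaleR) (intro mult_mono, auto)
  also have "norm (s2 *\<^sub>R sub (V1 - V2)) \<le> \<beta> / sqrt l * norm (V1 - V2)"
    using s2b n2 by (simp only: norm_scaleR) (intro mult_mono, auto)
  finally show ?thesis
    by (simp add: Q1_def[symmetric] Q2_def[symmetric] V1_def[symmetric] V2_def[symmetric] distrib_left mult_ac)
qed


lemma cfun_diff:
  assumes q1: "qf S1 (aug u) \<ge> l" and q2: "qf S2 (aug u) \<ge> l" and l: "l > 0" and \<beta>: "\<beta> \<ge> 0"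
  shows "\<bar>cfun \<beta> a1 p1 S1 u - cfun \<beta> a2 p2 S2 u\<bar> \<le> \<bar>a1 - a2\<bar> + norm (p1 - p2) * norm u
           + \<beta> * (\<bar>qf S1 (aug u) - qf S2 (aug u)\<bar> / sqrt l)"
proof -
  have e: "cfun \<beta> a1 p1 S1 u - cfun \<beta> a2 p2 S2 u = (a1 - a2) + (p1 - p2) \<bullet> u
      - \<beta> * (sqrt (qf S1 (aug u)) - sqrt (qf S2 (aug u)))"
    by (simp add: cfun_def inner_diff_left algebra_simps)
  have i1: "\<bar>(p1 - p2) \<bullet> u\<bar> \<le> norm (p1 - p2) * norm u" by (rule Cauchy_Schwarz_ineq2)
  have i2: "\<bar>\<beta> * (sqrt (qf S1 (aug u)) - sqrt (qf S2 (aug u)))\<bar> \<le> \<beta> * (\<bar>qf S1 (aug u) - qf S2 (aug u)\<bar> / sqrt l)"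
  proof -
    have "\<bar>\<beta> * (sqrt (qf S1 (aug u)) - sqrt (qf S2 (aug u)))\<bar> = \<beta> * \<bar>sqrt (qf S1 (aug u)) - sqrt (qf S2 (aug u))\<bar>"
      using \<beta> by (simp add: abs_mult)
    also have "\<dots> \<le> \<beta> * (\<bar>qf S1 (aug u) - qf S2 (aug u)\<bar> / sqrt l)"
      using sqrt_diff_le[OF q1 q2 l] \<beta> by (rule mult_left_mono)
    finally show ?thesis .
  qed
  show ?thesis unfolding e using i1 i2 by linarith
qed

lemma family_lip:
  fixes \<alpha> :: "'y::real_normed_vector \<Rightarrow> real" and p :: "'y \<Rightarrow> real^'m" and S :: "'y \<Rightarrow> real^('m option)^('m option)"
  assumes La: "\<And>y1 y2. y1 \<in> Y \<Longrightarrow> y2 \<in> Y \<Longrightarrow> \<bar>\<alpha> y1 - \<alpha> y2\<bar> \<le> La * norm (y1 - y2)"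
    and Lp: "\<And>y1 y2. y1 \<in> Y \<Longrightarrow> y2 \<in> Y \<Longrightarrow> norm (p y1 - p y2) \<le> Lp * norm (y1 - y2)"
    and LS: "\<And>y1 y2. y1 \<in> Y \<Longrightarrow> y2 \<in> Y \<Longrightarrow> mnorm (S y1 - S y2) \<le> LS * norm (y1 - y2)"
    and lb: "\<And>y w. y \<in> Y \<Longrightarrow> qf (S y) w \<ge> l * (norm w)^2" and l: "l > 0"
    and SB: "\<And>y. y \<in> Y \<Longrightarrow> mnorm (S y) \<le> SB"
    and nn: "La \<ge> 0" "Lp \<ge> 0" "LS \<ge> 0" "\<beta> \<ge> 0" "\<rho> \<ge> 0" "SB \<ge> 0"
  shows "\<exists>Lc LG LGu. Lc \<ge> 0 \<and> LG \<ge> 0 \<and> LGu \<ge> 0 \<and>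
     (\<forall>y1\<in>Y. \<forall>y2\<in>Y. \<forall>a. norm a \<le> \<rho> \<longrightarrow> \<bar>cfun \<beta> (\<alpha> y1) (p y1) (S y1) a - cfun \<beta> (\<alpha> y2) (p y2) (S y2) a\<bar> \<le> Lc * norm (y1 - y2)) \<and>
     (\<forall>y1\<in>Y. \<forall>y2\<in>Y. \<forall>a. norm a \<le> \<rho> \<longrightarrow> norm (Gfun \<beta> (p y1) (S y1) a - Gfun \<beta> (p y2) (S y2) a) \<le> LG * norm (y1 - y2)) \<and>
     (\<forall>y\<in>Y. \<forall>a b. norm a \<le> \<rho> \<longrightarrow> norm b \<le> \<rho> \<longrightarrow> norm (Gfun \<beta> (p y) (S y) a - Gfun \<beta> (p y) (S y) b) \<le> LGu * norm (a - b))"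
proof -
  define W where "W = 1 + \<rho>"
  have W0: "W \<ge> 1" using nn by (simp add: W_def)
  have sl: "sqrt l > 0" using l by simp
  have lsl: "l * sqrt l > 0" using l sl by simp
  have augW: "norm (aug a) \<le> W" if "norm a \<le> \<rho>" for a :: "real^'m"
    using norm_aug_le[of a] that by (simp add: W_def)
  have augW2: "(norm (aug a))^2 \<le> W^2" if "norm a \<le> \<rho>" for a :: "real^'m"
    using augW[OF that] by (simp add: power_mono)
  have qlow: "qf (S y) (aug a) \<ge> l" if "y \<in> Y" for y a
  proof -
    have "l * 1 \<le> l * (norm (aug a))^2"
      using l norm_aug_ge1[of a] by (intro mult_left_mono) (auto simp: one_le_power)
    thus ?thesis using lb[OF that, of "aug a"] by simp
  qed
  have qdy: "\<bar>qf (S y1) (aug a) - qf (S y2) (aug a)\<bar> \<le> LS * norm (y1 - y2) * W^2"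
    if "y1 \<in> Y" "y2 \<in> Y" "norm a \<le> \<rho>" for y1 y2 a
  proof -
    have "\<bar>qf (S y1) (aug a) - qf (S y2) (aug a)\<bar> \<le> mnorm (S y1 - S y2) * (norm (aug a))^2"
      unfolding qf_diff_mat by (rule qf_bound)
    also have "\<dots> \<le> LS * norm (y1 - y2) * W^2"
      using LS[OF that(1,2)] augW2[OF that(3)] mnorm_nonneg[of "S y1 - S y2"] nn W0 by (intro mult_mono) auto
    finally show ?thesis .
  qed
  have Vb: "norm (S y *v aug a) \<le> SB * W" if "y \<in> Y" "norm a \<le> \<rho>" for y a
  proof -
    have "norm (S y *v aug a) \<le> mnorm (S y) * norm (aug a)" by (rule norm_mv_le)
    also have "\<dots> \<le> SB * W" using SB[OF that(1)] augW[OF that(2)] mnorm_nonneg[of "S y"] nn(6) nn W0 by (intro mult_mono) auto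
    finally show ?thesis .
  qed
  define Lc where "Lc = La + Lp * \<rho> + \<beta> * (LS * W^2 / sqrt l)"
  define LG where "LG = Lp + \<beta> * (LS * W^2 / (l * sqrt l) * (SB * W) + LS * W / sqrt l)"
  define LGu where "LGu = \<beta> * (2 * SB * W / (l * sqrt l) * (SB * W) + SB / sqrt l)"
  have nnc: "Lc \<ge> 0" "LG \<ge> 0" "LGu \<ge> 0"
    using nn W0 sl lsl by (auto simp: Lc_def LG_def LGu_def)
  have C1: "\<bar>cfun \<beta> (\<alpha> y1) (p y1) (S y1) a - cfun \<beta> (\<alpha> y2) (p y2) (S y2) a\<bar> \<le> Lc * norm (y1 - y2)"
    if y: "y1 \<in> Y" "y2 \<in> Y" and a: "norm a \<le> \<rho>" for y1 y2 a
  proof -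
    let ?d = "norm (y1 - y2)"
    have "\<bar>cfun \<beta> (\<alpha> y1) (p y1) (S y1) a - cfun \<beta> (\<alpha> y2) (p y2) (S y2) a\<bar> \<le> \<bar>\<alpha> y1 - \<alpha> y2\<bar> + norm (p y1 - p y2) * norm a
           + \<beta> * (\<bar>qf (S y1) (aug a) - qf (S y2) (aug a)\<bar> / sqrt l)"
      by (rule cfun_diff[OF qlow[OF y(1)] qlow[OF y(2)] l nn(4)])
    also have "\<dots> \<le> La * ?d + Lp * ?d * \<rho> + \<beta> * (LS * ?d * W^2 / sqrt l)"
    proof -
      have "norm (p y1 - p y2) * norm a \<le> Lp * ?d * \<rho>" using Lp[OF y] a nn W0 by (intro mult_mono) auto
      moreover have "\<beta> * (\<bar>qf (S y1) (aug a) - qf (S y2) (aug a)\<bar> / sqrt l) \<le> \<beta> * (LS * ?d * W^2 / sqrt l)"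
        using qdy[OF y a] nn(4) sl by (intro mult_left_mono divide_right_mono) auto
      ultimately show ?thesis using La[OF y] by linarith
    qed
    also have "\<dots> = Lc * ?d" by (simp add: Lc_def algebra_simps)
    finally show ?thesis .
  qed
  have C2: "norm (Gfun \<beta> (p y1) (S y1) a - Gfun \<beta> (p y2) (S y2) a) \<le> LG * norm (y1 - y2)"
    if y: "y1 \<in> Y" "y2 \<in> Y" and a: "norm a \<le> \<rho>" for y1 y2 a
  proof -
    let ?d = "norm (y1 - y2)"
    have "norm (Gfun \<beta> (p y1) (S y1) a - Gfun \<beta> (p y2) (S y2) a) \<le> norm (p y1 - p y2) +
       \<beta> * (\<bar>qf (S y1) (aug a) - qf (S y2) (aug a)\<bar> / (l * sqrt l) * norm (S y1 *v aug a)
          + norm (S y1 *v aug a - S y2 *v aug a) / sqrt l)"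
      by (rule Gfun_diff[OF qlow[OF y(1)] qlow[OF y(2)] l nn(4)])
    also have "\<dots> \<le> Lp * ?d + \<beta> * (LS * ?d * W^2 / (l * sqrt l) * (SB * W) + LS * ?d * W / sqrt l)"
    proof -
      have t1: "\<bar>qf (S y1) (aug a) - qf (S y2) (aug a)\<bar> / (l * sqrt l) * norm (S y1 *v aug a)
              \<le> LS * ?d * W^2 / (l * sqrt l) * (SB * W)"
        using qdy[OF y a] Vb[OF y(1) a] lsl nn nn W0 by (intro mult_mono divide_right_mono) auto
      have "norm (S y1 *v aug a - S y2 *v aug a) = norm ((S y1 - S y2) *v aug a)"
        by (simp add: matrix_vector_mult_diff_rdistrib)
      also have "\<dots> \<le> mnorm (S y1 - S y2) * norm (aug a)" by (rule norm_mv_le)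
      also have "\<dots> \<le> LS * ?d * W" using LS[OF y] augW[OF a] mnorm_nonneg[of "S y1 - S y2"] nn W0 by (intro mult_mono) auto
      finally have t2: "norm (S y1 *v aug a - S y2 *v aug a) / sqrt l \<le> LS * ?d * W / sqrt l"
        using sl by (intro divide_right_mono) auto
      have "\<beta> * (\<bar>qf (S y1) (aug a) - qf (S y2) (aug a)\<bar> / (l * sqrt l) * norm (S y1 *v aug a)
          + norm (S y1 *v aug a - S y2 *v aug a) / sqrt l) \<le> \<beta> * (LS * ?d * W^2 / (l * sqrt l) * (SB * W) + LS * ?d * W / sqrt l)"
        using t1 t2 nn(4) by (intro mult_left_mono) auto
      thus ?thesis using Lp[OF y] by linarith
    qed
    also have "\<dots> = LG * ?d" by (simp add: LG_def algebra_simps)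
    finally show ?thesis .
  qed
  have C3: "norm (Gfun \<beta> (p y) (S y) a - Gfun \<beta> (p y) (S y) b) \<le> LGu * norm (a - b)"
    if y: "y \<in> Y" and a: "norm a \<le> \<rho>" and b: "norm b \<le> \<rho>" for y a b
  proof -
    let ?d = "norm (a - b)"
    have wd: "norm (aug a - aug b) = ?d" by (simp add: aug_diff)
    have Sd: "norm (S y *v aug a - S y *v aug b) \<le> SB * ?d"
    proof -
      have "norm (S y *v aug a - S y *v aug b) = norm (S y *v (aug a - aug b))"
        by (simp add: matrix_vector_mult_diff_distrib)
      also have "\<dots> \<le> mnorm (S y) * norm (aug a - aug b)" by (rule norm_mv_le)
      also have "\<dots> \<le> SB * ?d" unfolding wd using SB[OF y] by (rule mult_right_mono) simp
      finally show ?thesis .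
    qed
    have qd: "\<bar>qf (S y) (aug a) - qf (S y) (aug b)\<bar> \<le> 2 * SB * W * ?d"
    proof -
      have "qf (S y) (aug a) - qf (S y) (aug b) = (aug a - aug b) \<bullet> (S y *v aug a) + aug b \<bullet> (S y *v aug a - S y *v aug b)"
        by (simp add: qf_def inner_diff_left inner_diff_right)
      hence "\<bar>qf (S y) (aug a) - qf (S y) (aug b)\<bar> \<le> norm (aug a - aug b) * norm (S y *v aug a) + norm (aug b) * norm (S y *v aug a - S y *v aug b)"
        using Cauchy_Schwarz_ineq2[of "aug a - aug b" "S y *v aug a"] Cauchy_Schwarz_ineq2[of "aug b" "S y *v aug a - S y *v aug b"]
        by linarith
      also have "\<dots> \<le> ?d * (SB * W) + W * (SB * ?d)"
        using Vb[OF y a] augW[OF b] Sd wd nn W0 by (intro add_mono mult_mono) auto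
      finally show ?thesis by (simp add: algebra_simps)
    qed
    have "norm (Gfun \<beta> (p y) (S y) a - Gfun \<beta> (p y) (S y) b) \<le> norm (p y - p y) +
       \<beta> * (\<bar>qf (S y) (aug a) - qf (S y) (aug b)\<bar> / (l * sqrt l) * norm (S y *v aug a)
          + norm (S y *v aug a - S y *v aug b) / sqrt l)"
      by (rule Gfun_diff[OF qlow[OF y] qlow[OF y] l nn(4)])
    also have "\<dots> \<le> \<beta> * (2 * SB * W * ?d / (l * sqrt l) * (SB * W) + SB * ?d / sqrt l)"
    proof -
      have t1: "\<bar>qf (S y) (aug a) - qf (S y) (aug b)\<bar> / (l * sqrt l) * norm (S y *v aug a)
              \<le> 2 * SB * W * ?d / (l * sqrt l) * (SB * W)"
        using qd Vb[OF y a] lsl nn W0 by (intro mult_mono divide_right_mono) auto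
      have t2: "norm (S y *v aug a - S y *v aug b) / sqrt l \<le> SB * ?d / sqrt l"
        using Sd sl by (intro divide_right_mono) auto
      show ?thesis using t1 t2 nn(4) by (simp add: mult_left_mono add_mono)
    qed
    also have "\<dots> = LGu * ?d" by (simp add: LGu_def algebra_simps)
    finally show ?thesis .
  qed
  show ?thesis using nnc C1 C2 C3 by blast
qed




lemma C2_lip:
  fixes h :: "'a::euclidean_space \<Rightarrow> 'b::real_normed_vector"
  assumes C2: "C2_on X h" and sub: "cball x e \<subseteq> X"
  shows "\<exists>L\<ge>0. \<forall>a\<in>cball x e. \<forall>b\<in>cball x e. norm (h a - h b) \<le> L * norm (a - b)"
proof -
  obtain h' :: "'a \<Rightarrow> ('a \<Rightarrow>\<^sub>L 'b)" and h'' :: "'a \<Rightarrow> ('a \<Rightarrow>\<^sub>L ('a \<Rightarrow>\<^sub>L 'b))" where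
    d: "\<forall>y\<in>X. (h has_derivative blinfun_apply (h' y)) (at y) \<and> (h' has_derivative blinfun_apply (h'' y)) (at y)"
    using C2 unfolding C2_on_def by blast
  have "continuous_on (cball x e) h'"
    using d sub by (intro continuous_at_imp_continuous_on) (auto intro: has_derivative_continuous)
  hence "compact (h' ` cball x e)" by (intro compact_continuous_image) auto
  hence "bounded (h' ` cball x e)" by (rule compact_imp_bounded)
  then obtain B where B: "B > 0" "\<forall>y\<in>cball x e. norm (h' y) \<le> B" unfolding bounded_pos by auto
  have "norm (h a - h b) \<le> B * norm (a - b)" if "a \<in> cball x e" "b \<in> cball x e" for a b
  proof (rule differentiable_bound[where f'="\<lambda>y. blinfun_apply (h' y)"])
    show "convex (cball x e)" by simp
    show "(h has_derivative blinfun_apply (h' y)) (at y within cball x e)" if "y \<in> cball x e" for y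
    proof -
      have "y \<in> X" using sub that by blast
      thus ?thesis using d by (auto intro: has_derivative_at_withinI)
    qed
    show "onorm (blinfun_apply (h' y)) \<le> B" if "y \<in> cball x e" for y
    proof (rule onorm_le)
      fix z show "norm (blinfun_apply (h' y) z) \<le> B * norm z"
        using norm_blinfun[of "h' y" z] B that by (meson mult_right_mono norm_ge_zero order_trans)
    qed
  qed (use that in auto)
  thus ?thesis using B(1) by (intro exI[of _ B]) auto
qed

definition lipK :: "'a::real_normed_vector set \<Rightarrow> ('a \<Rightarrow> 'b::real_normed_vector) \<Rightarrow> bool" where
  "lipK K f \<longleftrightarrow> (\<exists>L. \<forall>a\<in>K. \<forall>b\<in>K. norm (f a - f b) \<le> L * norm (a - b))"

lemma lipK_nonneg: "lipK K f \<Longrightarrow> \<exists>L\<ge>0. \<forall>a\<in>K. \<forall>b\<in>K. norm (f a - f b) \<le> L * norm (a - b)"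
  unfolding lipK_def
proof (elim exE)
  fix L assume L: "\<forall>a\<in>K. \<forall>b\<in>K. norm (f a - f b) \<le> L * norm (a - b)"
  show "\<exists>L\<ge>0. \<forall>a\<in>K. \<forall>b\<in>K. norm (f a - f b) \<le> L * norm (a - b)"
  proof (intro exI[of _ "max L 0"] conjI ballI)
    fix a b assume "a \<in> K" "b \<in> K"
    hence "norm (f a - f b) \<le> L * norm (a - b)" using L by blast
    also have "\<dots> \<le> max L 0 * norm (a - b)" by (intro mult_right_mono) auto
    finally show "norm (f a - f b) \<le> max L 0 * norm (a - b)" .
  qed simp
qed

lemma lipK_const: "lipK K (\<lambda>y. c)"
  unfolding lipK_def by (intro exI[of _ 0]) auto

lemma lipK_add:
  assumes "lipK K f" "lipK K g" shows "lipK K (\<lambda>y. f y + g y)"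
proof -
  obtain L1 where L1: "\<forall>a\<in>K. \<forall>b\<in>K. norm (f a - f b) \<le> L1 * norm (a - b)" using assms(1) unfolding lipK_def by blast
  obtain L2 where L2: "\<forall>a\<in>K. \<forall>b\<in>K. norm (g a - g b) \<le> L2 * norm (a - b)" using assms(2) unfolding lipK_def by blast
  show ?thesis unfolding lipK_def
  proof (intro exI[of _ "L1 + L2"] ballI)
    fix a b assume ab: "a \<in> K" "b \<in> K"
    have "norm ((f a + g a) - (f b + g b)) \<le> norm (f a - f b) + norm (g a - g b)"
      using norm_triangle_ineq[of "f a - f b" "g a - g b"] by (simp add: algebra_simps)
    also have "\<dots> \<le> (L1 + L2) * norm (a - b)" using L1 L2 ab by (simp add: distrib_right add_mono)
    finally show "norm ((f a + g a) - (f b + g b)) \<le> (L1 + L2) * norm (a - b)" .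
  qed
qed

lemma lipK_scale:
  assumes "lipK K f" shows "lipK K (\<lambda>y. c *\<^sub>R f y)"
proof -
  obtain L where L: "\<forall>a\<in>K. \<forall>b\<in>K. norm (f a - f b) \<le> L * norm (a - b)" using assms unfolding lipK_def by blast
  show ?thesis unfolding lipK_def
  proof (intro exI[of _ "\<bar>c\<bar> * L"] ballI)
    fix a b assume ab: "a \<in> K" "b \<in> K"
    have "norm (c *\<^sub>R f a - c *\<^sub>R f b) = norm (c *\<^sub>R (f a - f b))"
      by (simp only: scaleR_right_diff_distrib)
    also have "\<dots> = \<bar>c\<bar> * norm (f a - f b)" by (rule norm_scaleR)
    also have "\<dots> \<le> \<bar>c\<bar> * (L * norm (a - b))" using L ab by (intro mult_left_mono) auto
    finally show "norm (c *\<^sub>R f a - c *\<^sub>R f b) \<le> \<bar>c\<bar> * L * norm (a - b)" by (simp add: mult.assoc)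
  qed
qed

lemma lipK_cmult:
  fixes f :: "_ \<Rightarrow> real"
  assumes "lipK K f" shows "lipK K (\<lambda>y. c * f y)"
  using lipK_scale[OF assms, of c] by simp

lemma lipK_minus: "lipK K f \<Longrightarrow> lipK K (\<lambda>y. - f y)"
  using lipK_scale[of K f "-1"] by simp

lemma lipK_diff: "lipK K f \<Longrightarrow> lipK K g \<Longrightarrow> lipK K (\<lambda>y. f y - g y)"
  using lipK_add[of K f "\<lambda>y. - g y"] lipK_minus[of K g] by simp

lemma lipK_bounded:
  assumes "lipK K f" "bounded K"
  shows "\<exists>M. \<forall>a\<in>K. norm (f a) \<le> M"
proof (cases "K = {}")
  case True then show ?thesis by simp
next
  case False
  then obtain a0 where a0: "a0 \<in> K" by auto
  obtain L where L: "L \<ge> 0" "\<forall>a\<in>K. \<forall>b\<in>K. norm (f a - f b) \<le> L * norm (a - b)" using lipK_nonneg[OF assms(1)] by blast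
  obtain B where B: "\<forall>a\<in>K. norm a \<le> B" using assms(2) unfolding bounded_iff by auto
  show ?thesis
  proof (intro exI ballI)
    fix a assume a: "a \<in> K"
    have "norm (f a) \<le> norm (f a0) + norm (f a - f a0)" using norm_triangle_ineq[of "f a0" "f a - f a0"] by simp
    also have "norm (f a - f a0) \<le> L * norm (a - a0)" using L a a0 by blast
    also have "L * norm (a - a0) \<le> L * (B + B)"
    proof (rule mult_left_mono)
      have "norm a \<le> B" "norm a0 \<le> B" using B a a0 by auto
      thus "norm (a - a0) \<le> B + B" using norm_triangle_ineq4[of a a0] by linarith
    qed (rule L(1))
    finally show "norm (f a) \<le> norm (f a0) + L * (B + B)" by simp
  qed
qed

lemma lipK_mult:
  fixes f g :: "_ \<Rightarrow> real"
  assumes "lipK K f" "lipK K g" "bounded K"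
  shows "lipK K (\<lambda>y. f y * g y)"
proof -
  obtain L1 where L1: "L1 \<ge> 0" "\<forall>a\<in>K. \<forall>b\<in>K. norm (f a - f b) \<le> L1 * norm (a - b)" using lipK_nonneg[OF assms(1)] by blast
  obtain L2 where L2: "L2 \<ge> 0" "\<forall>a\<in>K. \<forall>b\<in>K. norm (g a - g b) \<le> L2 * norm (a - b)" using lipK_nonneg[OF assms(2)] by blast
  obtain M1 where M1: "\<forall>a\<in>K. norm (f a) \<le> M1" using lipK_bounded[OF assms(1,3)] by blast
  obtain M2 where M2: "\<forall>a\<in>K. norm (g a) \<le> M2" using lipK_bounded[OF assms(2,3)] by blast
  show ?thesis unfolding lipK_def
  proof (intro exI[of _ "M1 * L2 + M2 * L1"] ballI)
    fix a b assume ab: "a \<in> K" "b \<in> K"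
    have "f a * g a - f b * g b = f a * (g a - g b) + g b * (f a - f b)" by (simp add: algebra_simps)
    hence "\<bar>f a * g a - f b * g b\<bar> \<le> \<bar>f a * (g a - g b)\<bar> + \<bar>g b * (f a - f b)\<bar>"
      by (simp only: abs_triangle_ineq)
    hence "\<bar>f a * g a - f b * g b\<bar> \<le> \<bar>f a\<bar> * \<bar>g a - g b\<bar> + \<bar>g b\<bar> * \<bar>f a - f b\<bar>"
      by (simp only: abs_mult)
    also have "\<dots> \<le> M1 * (L2 * norm (a - b)) + M2 * (L1 * norm (a - b))"
      using M1 M2 L1 L2 ab by (intro add_mono mult_mono) auto
    finally show "norm (f a * g a - f b * g b) \<le> (M1 * L2 + M2 * L1) * norm (a - b)"
      by (simp add: algebra_simps)
  qed
qed

lemma lipK_sum: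
  assumes "finite I" "\<And>i. i \<in> I \<Longrightarrow> lipK K (f i)"
  shows "lipK K (\<lambda>y. \<Sum>i\<in>I. f i y)"
  using assms by (induction I rule: finite_induct) (auto intro: lipK_add lipK_const)

lemma lipK_component: "lipK K f \<Longrightarrow> lipK K (\<lambda>y. f y $ i)"
  unfolding lipK_def
proof (elim exE, intro exI ballI)
  fix L a b assume L: "\<forall>a\<in>K. \<forall>b\<in>K. norm (f a - f b) \<le> L * norm (a - b)" and ab: "a \<in> K" "b \<in> K"
  have "norm (f a $ i - f b $ i) = norm ((f a - f b) $ i)" by simp
  also have "\<dots> \<le> norm (f a - f b)" by (rule Finite_Cartesian_Product.norm_nth_le)
  also have "\<dots> \<le> L * norm (a - b)" using L ab by blast
  finally show "norm (f a $ i - f b $ i) \<le> L * norm (a - b)" .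
qed

lemma lipK_vec:
  fixes f :: "'a::real_normed_vector \<Rightarrow> real^'k"
  assumes "\<And>i. lipK K (\<lambda>y. f y $ i)"
  shows "lipK K f"
proof -
  have "\<forall>i. \<exists>L. \<forall>a\<in>K. \<forall>b\<in>K. norm (f a $ i - f b $ i) \<le> L * norm (a - b)"
    using assms unfolding lipK_def by blast
  then obtain Lf where Lf: "\<And>i a b. a \<in> K \<Longrightarrow> b \<in> K \<Longrightarrow> norm (f a $ i - f b $ i) \<le> Lf i * norm (a - b)"
    by metis
  show ?thesis unfolding lipK_def
  proof (intro exI[of _ "\<Sum>i\<in>UNIV. Lf i"] ballI)
    fix a b assume ab: "a \<in> K" "b \<in> K"
    have "norm (f a - f b) \<le> (\<Sum>i\<in>UNIV. \<bar>(f a - f b) $ i\<bar>)" by (rule norm_le_l1_cart)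
    also have "\<dots> \<le> (\<Sum>i\<in>UNIV. Lf i * norm (a - b))"
      using Lf[OF ab] by (intro sum_mono) simp
    finally show "norm (f a - f b) \<le> (\<Sum>i\<in>UNIV. Lf i) * norm (a - b)" by (simp add: sum_distrib_right)
  qed
qed

lemma lipK_mat:
  fixes f :: "'a::real_normed_vector \<Rightarrow> real^'k^'j"
  assumes "\<And>i j. lipK K (\<lambda>y. f y $ i $ j)"
  shows "\<exists>L\<ge>0. \<forall>a\<in>K. \<forall>b\<in>K. mnorm (f a - f b) \<le> L * norm (a - b)"
proof -
  have "\<forall>ij. \<exists>L. \<forall>a\<in>K. \<forall>b\<in>K. norm (f a $ fst ij $ snd ij - f b $ fst ij $ snd ij) \<le> L * norm (a - b)"
    using assms unfolding lipK_def by blast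
  then obtain Lf where Lf: "\<And>ij a b. a \<in> K \<Longrightarrow> b \<in> K \<Longrightarrow> norm (f a $ fst ij $ snd ij - f b $ fst ij $ snd ij) \<le> Lf ij * norm (a - b)"
    by metis
  define L where "L = (\<Sum>i\<in>UNIV. \<Sum>j\<in>UNIV. \<bar>Lf (i, j)\<bar>)"
  have L0: "L \<ge> 0" unfolding L_def by (intro sum_nonneg) auto
  have "mnorm (f a - f b) \<le> L * norm (a - b)" if ab: "a \<in> K" "b \<in> K" for a b
  proof -
    have "mnorm (f a - f b) \<le> (\<Sum>i\<in>UNIV. \<Sum>j\<in>UNIV. \<bar>Lf (i, j)\<bar> * norm (a - b))"
    proof (rule mnorm_entries_le)
      fix i j
      have "\<bar>(f a - f b) $ i $ j\<bar> \<le> Lf (i, j) * norm (a - b)" using Lf[OF ab, of "(i, j)"] by simp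
      also have "\<dots> \<le> \<bar>Lf (i, j)\<bar> * norm (a - b)" by (intro mult_right_mono) auto
      finally show "\<bar>(f a - f b) $ i $ j\<bar> \<le> \<bar>Lf (i, j)\<bar> * norm (a - b)" .
    qed
    also have "\<dots> = L * norm (a - b)" by (simp add: L_def sum_distrib_right)
    finally show ?thesis .
  qed
  thus ?thesis using L0 by blast
qed

lemma C2_lipK:
  fixes h :: "'a::euclidean_space \<Rightarrow> 'b::real_normed_vector"
  assumes "C2_on X h" "cball x e \<subseteq> X"
  shows "lipK (cball x e) h"
  using C2_lip[OF assms] unfolding lipK_def by blast




lemma qf_add: "qf S (a + b) = qf S a + a \<bullet> (S *v b) + b \<bullet> (S *v a) + qf S b"
  by (simp add: qf_def matrix_vector_right_distrib inner_add_left inner_add_right)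

lemma qf_scale: "qf S (t *\<^sub>R a) = t^2 * qf S a"
  by (simp add: qf_def matrix_vector_mult_scaleR power2_eq_square)

definition polar :: "(real^'m \<Rightarrow> real) \<Rightarrow> real^('m option) \<Rightarrow> real" where
  "polar Q v = (v $ None)^2 * Q 0 + v $ None * ((Q (sub v) - Q (- sub v)) / 2) + ((Q (sub v) + Q (- sub v)) / 2 - Q 0)"

lemma qf_polar:
  fixes S :: "real^('m::finite option)^('m option)"
  shows "qf S v = polar (\<lambda>u. qf S (aug u)) v"
proof -
  define e :: "real^('m option)" where "e = axis None 1"
  define f where "f = emb (sub v)"
  define t where "t = v $ None"
  have v: "v = t *\<^sub>R e + f"
    unfolding vec_eq_iff e_def f_def t_def by (auto split: option.splits simp: axis_def emb_def)
  have a0: "aug (0::real^'m) = e" by (simp add: aug_eq e_def emb_def vec_eq_iff split: option.splits)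
  have ad: "aug (sub v) = e + f" by (simp add: aug_eq e_def f_def)
  have am: "aug (- sub v) = e + (- f)" by (simp add: aug_eq e_def f_def emb_minus)
  define X where "X = e \<bullet> (S *v f) + f \<bullet> (S *v e)"
  have q1: "qf S v = t^2 * qf S e + t * X + qf S f"
    unfolding v qf_add qf_scale X_def by (simp add: matrix_vector_mult_scaleR algebra_simps)
  have q2: "qf S (e + f) = qf S e + X + qf S f" unfolding qf_add X_def by simp
  have q3: "qf S (e + (- f)) = qf S e - X + qf S f"
  proof -
    have n: "S *v (- f) = - (S *v f)" by (simp add: matrix_vector_mult_def vec_eq_iff sum_negf)
    have "qf S (- f) = qf S f" by (simp add: qf_def n)
    thus ?thesis unfolding qf_add X_def by (simp add: n)
  qed
  show ?thesis
    unfolding polar_def a0 ad am q1 q2 q3 t_def[symmetric] by (simp add: algebra_simps power2_eq_square)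
qed


lemma mv_axis: "(S *v axis j 1) $ i = S $ i $ (j::'k::finite)"
proof -
  have "(S *v axis j 1) $ i = (\<Sum>k\<in>UNIV. S $ i $ k * (if k = j then 1 else 0))"
    by (simp add: matrix_vector_mult_def axis_def)
  also have "\<dots> = S $ i $ j" by (simp add: if_distrib cong: if_cong)
  finally show ?thesis .
qed

lemma entry_polar:
  fixes S :: "real^'k^'k"
  assumes sym: "transpose S = S"
  shows "S $ i $ j = (qf S (axis i 1 + axis j 1) - qf S (axis i 1 - axis j 1)) / 4"
proof -
  define a b :: "real^'k" where "a = axis i 1" and "b = axis j 1"
  have ab: "a \<bullet> (S *v b) = S $ i $ j" by (simp add: a_def b_def inner_axis' mv_axis)
  have ba: "b \<bullet> (S *v a) = a \<bullet> (S *v b)" by (rule symm_inner[OF sym])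
  have "qf S (a + b) - qf S (a - b) = 2 * (a \<bullet> (S *v b)) + 2 * (b \<bullet> (S *v a))"
    by (simp add: qf_def matrix_vector_right_distrib matrix_vector_mult_diff_distrib inner_add_left inner_add_right
        inner_diff_left inner_diff_right)
  thus ?thesis using ab ba by (simp add: a_def b_def)
qed

lemma pd_uniform:
  fixes M :: "real^'k^'k"
  assumes pd: "\<And>w. w \<noteq> 0 \<Longrightarrow> qf M w > 0"
  shows "\<exists>l>0. \<forall>w. qf M w \<ge> l * (norm w)^2"
proof -
  have "continuous_on (sphere 0 1) (qf M)" unfolding qf_def[abs_def]
    by (intro continuous_intros linear_continuous_on) auto
  moreover have "sphere (0::real^'k) 1 \<noteq> {}"
  proof -
    obtain i :: 'k where True by simp
    have "axis i 1 \<in> sphere (0::real^'k) 1" by (simp add: norm_axis_1)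
    thus ?thesis by blast
  qed
  ultimately obtain v0 where v0: "v0 \<in> sphere 0 1" "\<forall>v\<in>sphere 0 1. qf M v0 \<le> qf M v"
    using continuous_attains_inf[OF compact_sphere] by blast
  have l: "qf M v0 > 0" using pd v0(1) by (metis mem_sphere_0 norm_zero zero_neq_one)
  have "qf M w \<ge> qf M v0 * (norm w)^2" for w
  proof (cases "w = 0")
    case True then show ?thesis by (simp add: qf_def)
  next
    case False
    define u where "u = w /\<^sub>R norm w"
    have "u \<in> sphere 0 1" using False by (simp add: u_def)
    hence "qf M v0 \<le> qf M u" using v0 by blast
    hence "qf M v0 * (norm w)^2 \<le> qf M u * (norm w)^2" by (rule mult_right_mono) simp
    also have "qf M u * (norm w)^2 = qf M w"
    proof -
      have "w = norm w *\<^sub>R u" using False by (simp add: u_def)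
      hence "qf M w = (norm w)^2 * qf M u" by (metis qf_scale)
      thus ?thesis by simp
    qed
    finally show ?thesis .
  qed
  thus ?thesis using l by blast
qed

lemma emb_quad:
  fixes S :: "real^('m::finite option)^('m option)"
  shows "v \<bullet> ((\<chi> i j. S $ Some i $ Some j) *v v) = qf S (emb v)"
proof -
  have "sub (S *v emb v) = (\<chi> i j. S $ Some i $ Some j) *v v"
    by (simp add: vec_eq_iff matrix_vector_mult_def sum_option emb_def)
  moreover have "qf S (emb v) = sub (S *v emb v) \<bullet> v"
  proof -
    have "qf S (emb v) = (S *v emb v) \<bullet> emb v" unfolding qf_def by (rule inner_commute)
    also have "\<dots> = sub (S *v emb v) \<bullet> v" by (rule inner_emb)
    finally show ?thesis .
  qed
  ultimately show ?thesis by (simp add: inner_commute)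
qed

lemma outer_quad:
  fixes g v :: "real^'k"
  shows "v \<bullet> ((\<chi> i j. g $ i * g $ j) *v v) = (g \<bullet> v)^2"
proof -
  have "(\<chi> i j. g $ i * g $ j) *v v = (g \<bullet> v) *\<^sub>R g"
    by (simp add: vec_eq_iff matrix_vector_mult_def inner_vec_def sum_distrib_left mult_ac)
  thus ?thesis by (simp add: power2_eq_square inner_commute)
qed

lemma lipK_cong: "(\<And>y. y \<in> K \<Longrightarrow> f y = g y) \<Longrightarrow> lipK K f \<Longrightarrow> lipK K g"
  unfolding lipK_def by (metis (no_types, lifting))

lemma lipK_divide:
  fixes f :: "_ \<Rightarrow> real"
  shows "lipK K f \<Longrightarrow> lipK K (\<lambda>y. f y / c)"
  using lipK_cmult[of K f "1/c"] by simp

lemma lipK_polar: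
  assumes "\<And>u. lipK K (\<lambda>y. Q y u)"
  shows "lipK K (\<lambda>y. polar (Q y) v)"
  unfolding polar_def
  by (intro lipK_add lipK_diff lipK_cmult lipK_divide assms lipK_const)



theorem lemma6:
  fixes X :: "(real^'n) set"
    and B :: "real^'n \<Rightarrow> real" and gradB :: "real^'n \<Rightarrow> real^'n"
    and \<gamma> :: "real \<Rightarrow> real"
    and ft :: "real^'n \<Rightarrow> real^'n" and gt :: "real^'n \<Rightarrow> real^'m^'n"
    and uref :: "real^'n \<Rightarrow> real^'m"
    and k :: "'m option \<Rightarrow> real^'n \<Rightarrow> real^'n \<Rightarrow> real"
    and sn \<beta> :: real
    and xs :: "'N::finite \<Rightarrow> real^'n" and us :: "'N \<Rightarrow> real^'m" and zs :: "real^'N"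
    and x :: "real^'n"
  assumes X_open: "open X"
    and B_C1: "\<forall>y\<in>X. (B has_derivative (\<lambda>h. gradB y \<bullet> h)) (at y)" "continuous_on X gradB"
    and gamma: "ext_class_K_inf \<gamma>"
    and kernels: "\<forall>i. psd_kernel (k i)"
    and sn_pos: "sn > 0" and beta_pos: "\<beta> > 0"
    and Sigma_pd: "\<forall>y\<in>X. \<forall>v. v \<noteq> 0 \<longrightarrow> v \<bullet> (Sigma_B k sn xs us y *v v) > 0"
    and A6_Lf: "C2_on X (LfB gradB ft)"
    and A6_Lg: "C2_on X (LgB gradB gt)"
    and A6_gamma: "C2_on X (\<lambda>y. \<gamma> (B y))"
    and A6_uref: "C2_on X uref"
    and A6_mu: "\<forall>u. C2_on X (\<lambda>y. mu_B k sn xs us zs y u)"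
    and A6_sigma: "\<forall>u. C2_on X (\<lambda>y. sigma_B k sn xs us y u)"
    and x_in: "x \<in> X"
    and lam_neg: "lambda_dagger \<beta> gradB gt k sn xs us zs x < 0"
  shows "\<exists>\<epsilon>>0.
           (\<forall>y\<in>ball x \<epsilon> \<inter> X. \<exists>!u. socp_minimizer \<beta> \<gamma> B gradB ft gt uref k sn xs us zs y u) \<and>
           (\<exists>L. \<forall>y1\<in>ball x \<epsilon> \<inter> X. \<forall>y2\<in>ball x \<epsilon> \<inter> X.
              dist (THE u. socp_minimizer \<beta> \<gamma> B gradB ft gt uref k sn xs us zs y1 u)
                   (THE u. socp_minimizer \<beta> \<gamma> B gradB ft gt uref k sn xs us zs y2 u)
              \<le> L * dist y1 y2)"
proof -
  define S where "S y = Sigma_B k sn xs us y" for y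
  define m where "m y = m_B k sn xs us zs y" for y
  define p where "p y = LgB_hat gradB gt k sn xs us zs y" for y
  define \<alpha> where "\<alpha> y = LfB gradB ft y + \<gamma> (B y) + m y $ None" for y
  define c where "c y u = cfun \<beta> (\<alpha> y) (p y) (S y) u" for y u
  define G where "G y u = Gfun \<beta> (p y) (S y) u" for y u
  have feas: "socp_feasible \<beta> \<gamma> B gradB ft gt k sn xs us zs y u \<longleftrightarrow> c y u \<ge> 0" for y u
  proof -
    have mu: "mu_B k sn xs us zs y u = m y $ None + sub (m y) \<bullet> u" by (simp add: mu_B_def m_def inner_aug)
    have pe: "p y = LgB gradB gt y + sub (m y)" by (simp add: p_def LgB_hat_def m_def sub_def)
    have si: "sigma_B k sn xs us y u = sqrt (qf (S y) (aug u))" by (simp add: sigma_B_def qf_def S_def)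
    show ?thesis unfolding socp_feasible_def c_def cfun_def \<alpha>_def mu si pe
      by (simp add: inner_add_left algebra_simps)
  qed
  have sqn: "(norm a)^2 \<le> (norm b)^2 \<longleftrightarrow> norm a \<le> norm b" for a b :: "real^'m"
    by (metis abs_le_square_iff abs_norm_cancel)
  have minim: "socp_minimizer \<beta> \<gamma> B gradB ft gt uref k sn xs us zs y u \<longleftrightarrow>
      c y u \<ge> 0 \<and> (\<forall>v. c y v \<ge> 0 \<longrightarrow> norm (u - uref y) \<le> norm (v - uref y))" for y u
    unfolding socp_minimizer_def feas sqn ..
  have sym: "transpose (S y) = S y" for y using Sigma_sym[OF kernels sn_pos] by (simp add: S_def)
  have pd: "qf (S y) w > 0" if "y \<in> X" "w \<noteq> 0" for y w
    using Sigma_pd that by (simp add: qf_def S_def)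
  have psd: "z \<bullet> (S y *v z) \<ge> 0" if "y \<in> X" for y z
    using pd[OF that, of z] by (cases "z = 0") (auto simp: qf_def)
  obtain e0 where e0: "e0 > 0" "cball x e0 \<subseteq> X" using X_open x_in open_contains_cball by blast
  define K where "K = cball x e0"
  have KX: "K \<subseteq> X" and bK: "bounded K" and xK: "x \<in> K" using e0 by (auto simp: K_def)
  have lLf: "lipK K (LfB gradB ft)" using C2_lipK[OF A6_Lf e0(2)] by (simp add: K_def)
  have lgam: "lipK K (\<lambda>y. \<gamma> (B y))" using C2_lipK[OF A6_gamma e0(2)] by (simp add: K_def)
  have lLg: "lipK K (LgB gradB gt)" using C2_lipK[OF A6_Lg e0(2)] by (simp add: K_def)
  have lur: "lipK K uref" using C2_lipK[OF A6_uref e0(2)] by (simp add: K_def)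
  have lmu: "lipK K (\<lambda>y. mu_B k sn xs us zs y u)" for u using C2_lipK[OF A6_mu[rule_format, of u] e0(2)] by (simp add: K_def)
  have lsig: "lipK K (\<lambda>y. sigma_B k sn xs us y u)" for u using C2_lipK[OF A6_sigma[rule_format, of u] e0(2)] by (simp add: K_def)
  have mu_eq: "mu_B k sn xs us zs y u = m y $ None + sub (m y) \<bullet> u" for y u by (simp add: mu_B_def m_def inner_aug)
  have lm: "lipK K m"
  proof (rule lipK_vec)
    fix a :: "'m option"
    show "lipK K (\<lambda>y. m y $ a)"
    proof (cases a)
      case None
      have "m y $ a = mu_B k sn xs us zs y 0" for y using None by (simp add: mu_eq)
      thus ?thesis using lmu[of 0] by simp
    next
      case (Some j)
      have "m y $ a = mu_B k sn xs us zs y (axis j 1) - mu_B k sn xs us zs y 0" for y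
        using Some by (simp add: mu_eq inner_axis)
      thus ?thesis using lipK_diff[OF lmu lmu] by simp
    qed
  qed
  have lsubm: "lipK K (\<lambda>y. sub (m y))"
    by (rule lipK_vec) (simp add: lipK_component[OF lm])
  have peq: "p y = LgB gradB gt y + sub (m y)" for y by (simp add: p_def LgB_hat_def m_def sub_def)
  have lp: "lipK K p" unfolding peq by (rule lipK_add[OF lLg lsubm])
  have l\<alpha>: "lipK K \<alpha>" unfolding \<alpha>_def by (intro lipK_add lLf lgam lipK_component lm)
  have lQ: "lipK K (\<lambda>y. qf (S y) (aug u))" for u
  proof (rule lipK_cong[OF _ lipK_mult[OF lsig lsig bK]])
    fix y assume "y \<in> K"
    hence "y \<in> X" using KX by blast
    hence q0: "qf (S y) (aug u) \<ge> 0" using pd[OF _ aug_nonzero] by (simp add: less_imp_le)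
    have "sigma_B k sn xs us y u = sqrt (qf (S y) (aug u))" by (simp add: sigma_B_def qf_def S_def)
    thus "sigma_B k sn xs us y u * sigma_B k sn xs us y u = qf (S y) (aug u)"
      using q0 by (simp only: real_sqrt_mult_self abs_of_nonneg)
  qed
  have lSe: "lipK K (\<lambda>y. S y $ i $ j)" for i j
  proof -
    have eqS: "S y $ i $ j = (polar (\<lambda>u. qf (S y) (aug u)) (axis i 1 + axis j 1) - polar (\<lambda>u. qf (S y) (aug u)) (axis i 1 - axis j 1)) / 4" for y
      using entry_polar[OF sym[of y], of i j]
      unfolding qf_polar[of "S y" "axis i 1 + axis j 1"] qf_polar[of "S y" "axis i 1 - axis j 1"] .
    have fe: "(\<lambda>y. S y $ i $ j) = (\<lambda>y. (polar (\<lambda>u. qf (S y) (aug u)) (axis i 1 + axis j 1) - polar (\<lambda>u. qf (S y) (aug u)) (axis i 1 - axis j 1)) / 4)"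
      by (rule ext) (rule eqS)
    show ?thesis unfolding fe by (intro lipK_divide lipK_diff lipK_polar lQ)
  qed
  obtain LS where LS: "LS \<ge> 0" "\<And>a b. a \<in> K \<Longrightarrow> b \<in> K \<Longrightarrow> mnorm (S a - S b) \<le> LS * norm (a - b)"
    using lipK_mat[of K S, OF lSe] by blast
  obtain La where La: "La \<ge> 0" "\<And>a b. a \<in> K \<Longrightarrow> b \<in> K \<Longrightarrow> norm (\<alpha> a - \<alpha> b) \<le> La * norm (a - b)"
    using lipK_nonneg[OF l\<alpha>] by blast
  obtain Lp where Lp: "Lp \<ge> 0" "\<And>a b. a \<in> K \<Longrightarrow> b \<in> K \<Longrightarrow> norm (p a - p b) \<le> Lp * norm (a - b)"
    using lipK_nonneg[OF lp] by blast
  obtain Lr where Lr: "Lr \<ge> 0" "\<And>a b. a \<in> K \<Longrightarrow> b \<in> K \<Longrightarrow> norm (uref a - uref b) \<le> Lr * norm (a - b)"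
    using lipK_nonneg[OF lur] by blast
  have dK: "norm (y - x) \<le> e0" if "y \<in> K" for y using that by (simp add: K_def dist_norm norm_minus_commute)
  define SB where "SB = mnorm (S x) + LS * e0"
  have SB: "mnorm (S y) \<le> SB" if "y \<in> K" for y
  proof -
    have "S y = S x + (S y - S x)" by simp
    hence "mnorm (S y) \<le> mnorm (S x) + mnorm (S y - S x)" by (metis mnorm_triangle)
    also have "mnorm (S y - S x) \<le> LS * norm (y - x)" using LS(2)[OF that xK] .
    also have "\<dots> \<le> LS * e0" using dK[OF that] LS(1) by (rule mult_left_mono)
    finally show ?thesis by (simp add: SB_def)
  qed
  have SB0: "SB \<ge> 0" using SB[OF xK] mnorm_nonneg[of "S x"] by linarith
  define R where "R = norm (uref x) + Lr * e0"
  have Rb: "norm (uref y) \<le> R" if "y \<in> K" for y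
  proof -
    have "norm (uref y) \<le> norm (uref x) + norm (uref y - uref x)" using norm_triangle_ineq[of "uref x" "uref y - uref x"] by simp
    also have "norm (uref y - uref x) \<le> Lr * norm (y - x)" using Lr(2)[OF that xK] .
    also have "\<dots> \<le> Lr * e0" using dK[OF that] Lr(1) by (rule mult_left_mono)
    finally show ?thesis by (simp add: R_def)
  qed
  have R0: "R \<ge> 0" using Lr(1) e0 by (simp add: R_def)
  obtain lx where lx: "lx > 0" "\<And>w. qf (S x) w \<ge> lx * (norm w)^2"
    using pd_uniform[of "S x"] pd[OF x_in] by blast
  define e1 where "e1 = min e0 (lx / (2 * (LS + 1)))"
  define l where "l = lx / 2"
  have e1: "e1 > 0" "e1 \<le> e0" using e0 lx LS by (auto simp: e1_def)
  have l0: "l > 0" using lx by (simp add: l_def)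
  have C1K: "cball x e1 \<subseteq> K" using e1 by (auto simp: K_def)
  have lb: "qf (S y) w \<ge> l * (norm w)^2" if "y \<in> cball x e1" for y w
  proof -
    have yK: "y \<in> K" using C1K that by blast
    have "norm (y - x) \<le> e1" using that by (simp add: dist_norm norm_minus_commute)
    hence "LS * norm (y - x) \<le> LS * e1" using LS(1) by (rule mult_left_mono)
    also have "\<dots> \<le> LS * (lx / (2 * (LS + 1)))" using LS(1) by (intro mult_left_mono) (auto simp: e1_def)
    also have "\<dots> \<le> lx / 2"
      using LS(1) lx by (simp add: field_simps)
    finally have "mnorm (S y - S x) \<le> lx / 2" using LS(2)[OF yK xK] by linarith
    hence q: "\<bar>qf (S y - S x) w\<bar> \<le> lx / 2 * (norm w)^2"
      using qf_bound[of "S y - S x" w] by (meson mult_right_mono order_trans zero_le_power2)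
    have "qf (S y) w = qf (S x) w + qf (S y - S x) w" using qf_diff_mat[of "S y" w "S x"] by simp
    thus ?thesis using q lx(2)[of w] by (simp add: l_def algebra_simps)
  qed
  define g where "g = p x"
  define M where "M = (\<beta>\<^sup>2) *\<^sub>R Sigma_LgB k sn xs us x - (\<chi> i j. g $ i * g $ j)"
  have SLg: "Sigma_LgB k sn xs us x = (\<chi> i j. S x $ Some i $ Some j)" by (simp add: Sigma_LgB_def S_def)
  have symM: "transpose M = M"
  proof -
    have "S x $ Some j $ Some i = S x $ Some i $ Some j" for i j
      using sym[of x] unfolding transpose_def vec_eq_iff by (metis (no_types, lifting) vec_lambda_beta)
    thus ?thesis unfolding M_def SLg by (simp add: transpose_def vec_eq_iff mult.commute)
  qed
  have "min_eigenvalue M < 0"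
    using lam_neg unfolding lambda_dagger_def Let_def M_def g_def p_def .
  then obtain v where v: "v \<bullet> (M *v v) < 0" using min_eigen_neg[OF symM] by blast
  have vM: "v \<bullet> (M *v v) = \<beta>\<^sup>2 * qf (S x) (emb v) - (p x \<bullet> v)^2"
  proof -
    have "M *v v = \<beta>\<^sup>2 *\<^sub>R (Sigma_LgB k sn xs us x *v v) - (\<chi> i j. g $ i * g $ j) *v v"
      unfolding M_def by (simp add: matrix_vector_mult_diff_rdistrib scaleR_matrix_vector_assoc)
    hence "v \<bullet> (M *v v) = \<beta>\<^sup>2 * (v \<bullet> (Sigma_LgB k sn xs us x *v v)) - v \<bullet> ((\<chi> i j. g $ i * g $ j) *v v)"
      by (simp add: inner_diff_right)
    thus ?thesis unfolding SLg emb_quad outer_quad g_def .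
  qed
  have hv: "\<beta>\<^sup>2 * qf (S x) (emb v) < (p x \<bullet> v)^2" using v vM by linarith
  have qxv: "qf (S x) (emb v) \<ge> 0" using psd[OF x_in] by (simp add: qf_def)
  define d where "d = (if p x \<bullet> v \<ge> 0 then v else - v)"
  have pd_d: "p x \<bullet> d = \<bar>p x \<bullet> v\<bar>" by (simp add: d_def)
  have qd_d: "qf (S y) (emb d) = qf (S y) (emb v)" for y
  proof -
    have "S y *v (- emb v) = - (S y *v emb v)" by (simp add: matrix_vector_mult_def vec_eq_iff sum_negf)
    thus ?thesis by (simp add: d_def qf_def emb_minus)
  qed
  have d0: "d \<noteq> 0"
  proof
    assume "d = 0"
    hence "v = 0" by (simp add: d_def split: if_splits)
    moreover have "emb (0::real^'m) = 0" by (simp add: vec_eq_iff emb_def split: option.splits)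
    ultimately show False using hv by (simp add: qf_def)
  qed
  define \<kappa> where "\<kappa> = p x \<bullet> d - \<beta> * sqrt (qf (S x) (emb d))"
  have \<kappa>: "\<kappa> > 0"
  proof -
    have "\<beta> * sqrt (qf (S x) (emb d)) = sqrt (\<beta>\<^sup>2 * qf (S x) (emb v))"
      using beta_pos by (simp add: qd_d real_sqrt_mult)
    also have "\<dots> < sqrt ((p x \<bullet> v)^2)" using hv by (rule real_sqrt_less_mono)
    also have "\<dots> = p x \<bullet> d" using pd_d by simp
    finally show ?thesis by (simp add: \<kappa>_def)
  qed
  define D where "D = norm d"
  have D0: "D > 0" using d0 by (simp add: D_def)
  define ld where "ld = l * D^2"
  have ld0: "ld > 0" using l0 D0 by (simp add: ld_def)
  have qld: "qf (S y) (emb d) \<ge> ld" if "y \<in> cball x e1" for y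
    using lb[OF that, of "emb d"] by (simp add: ld_def D_def)
  define C1 where "C1 = Lp * D + \<beta> * (LS * D^2 / sqrt ld)"
  have C10: "C1 \<ge> 0" using Lp(1) LS(1) beta_pos D0 ld0 by (simp add: C1_def)
  define e2 where "e2 = min e1 (\<kappa> / (2 * (C1 + 1)))"
  have e2: "e2 > 0" "e2 \<le> e1" using e1 \<kappa> C10 by (auto simp: e2_def)
  have C2K: "cball x e2 \<subseteq> cball x e1" using e2 by auto
  have slope: "p y \<bullet> d - \<beta> * sqrt (qf (S y) (emb d)) \<ge> \<kappa> / 2" if y: "y \<in> cball x e2" for y
  proof -
    have y1: "y \<in> cball x e1" using C2K y by blast
    have yK: "y \<in> K" using C1K y1 by blast
    have dy: "norm (y - x) \<le> e2" using y by (simp add: dist_norm norm_minus_commute)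
    have t1: "\<bar>p y \<bullet> d - p x \<bullet> d\<bar> \<le> Lp * norm (y - x) * D"
    proof -
      have "\<bar>p y \<bullet> d - p x \<bullet> d\<bar> = \<bar>(p y - p x) \<bullet> d\<bar>" by (simp add: inner_diff_left)
      also have "\<dots> \<le> norm (p y - p x) * D" unfolding D_def by (rule Cauchy_Schwarz_ineq2)
      also have "\<dots> \<le> Lp * norm (y - x) * D" using Lp(2)[OF yK xK] D0 by (intro mult_right_mono) auto
      finally show ?thesis .
    qed
    have t2: "\<bar>sqrt (qf (S y) (emb d)) - sqrt (qf (S x) (emb d))\<bar> \<le> LS * norm (y - x) * D^2 / sqrt ld"
    proof -
      have "\<bar>sqrt (qf (S y) (emb d)) - sqrt (qf (S x) (emb d))\<bar> \<le> \<bar>qf (S y) (emb d) - qf (S x) (emb d)\<bar> / sqrt ld"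
        using sqrt_diff_le[OF qld[OF y1] qld[of x] ld0] by (simp add: e1(1) less_imp_le)
      also have "\<bar>qf (S y) (emb d) - qf (S x) (emb d)\<bar> \<le> LS * norm (y - x) * D^2"
      proof -
        have "\<bar>qf (S y) (emb d) - qf (S x) (emb d)\<bar> \<le> mnorm (S y - S x) * (norm (emb d))^2"
          unfolding qf_diff_mat by (rule qf_bound)
        also have "\<dots> \<le> LS * norm (y - x) * D^2"
          unfolding norm_emb D_def[symmetric] using LS(2)[OF yK xK] by (rule mult_right_mono) simp
        finally show ?thesis .
      qed
      hence "\<bar>qf (S y) (emb d) - qf (S x) (emb d)\<bar> / sqrt ld \<le> LS * norm (y - x) * D^2 / sqrt ld"
        using ld0 by (intro divide_right_mono) auto
      finally show ?thesis .
    qed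
    have "p y \<bullet> d - \<beta> * sqrt (qf (S y) (emb d)) \<ge> \<kappa> - (Lp * norm (y - x) * D + \<beta> * (LS * norm (y - x) * D^2 / sqrt ld))"
    proof -
      have "\<beta> * \<bar>sqrt (qf (S y) (emb d)) - sqrt (qf (S x) (emb d))\<bar> \<le> \<beta> * (LS * norm (y - x) * D^2 / sqrt ld)"
        using t2 beta_pos by (intro mult_left_mono) auto
      hence "\<beta> * sqrt (qf (S y) (emb d)) \<le> \<beta> * sqrt (qf (S x) (emb d)) + \<beta> * (LS * norm (y - x) * D^2 / sqrt ld)"
      proof -
        have h1: "\<beta> * (sqrt (qf (S y) (emb d)) - sqrt (qf (S x) (emb d))) \<le> \<beta> * \<bar>sqrt (qf (S y) (emb d)) - sqrt (qf (S x) (emb d))\<bar>"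
          using beta_pos by (intro mult_left_mono) auto
        have h2: "\<beta> * (sqrt (qf (S y) (emb d)) - sqrt (qf (S x) (emb d))) = \<beta> * sqrt (qf (S y) (emb d)) - \<beta> * sqrt (qf (S x) (emb d))"
          by (rule right_diff_distrib)
        show ?thesis using h1 h2 \<open>\<beta> * \<bar>sqrt (qf (S y) (emb d)) - sqrt (qf (S x) (emb d))\<bar> \<le> \<beta> * (LS * norm (y - x) * D^2 / sqrt ld)\<close>
          by linarith
      qed
      thus ?thesis using t1 unfolding \<kappa>_def by linarith
    qed
    moreover have "Lp * norm (y - x) * D + \<beta> * (LS * norm (y - x) * D^2 / sqrt ld) = C1 * norm (y - x)"
      by (simp add: C1_def algebra_simps)
    moreover have "C1 * norm (y - x) \<le> \<kappa> / 2"
    proof -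
      have "C1 * norm (y - x) \<le> C1 * e2" using dy C10 by (rule mult_left_mono)
      also have "\<dots> \<le> C1 * (\<kappa> / (2 * (C1 + 1)))" using C10 by (intro mult_left_mono) (auto simp: e2_def)
      also have "\<dots> \<le> \<kappa> / 2" using C10 \<kappa> by (simp add: field_simps)
      finally show ?thesis .
    qed
    ultimately show ?thesis by linarith
  qed
  define A0 where "A0 = \<alpha> x - La * e0 - \<beta> * sqrt SB"
  define t0 where "t0 = max 0 (2 * (1 - A0) / \<kappa>)"
  define us0 where "us0 = t0 *\<^sub>R d"
  have t0: "t0 \<ge> 0" "A0 + t0 * (\<kappa> / 2) \<ge> 1"
  proof -
    show "t0 \<ge> 0" by (simp add: t0_def)
    have "t0 * (\<kappa> / 2) \<ge> (2 * (1 - A0) / \<kappa>) * (\<kappa> / 2)" using \<kappa> by (intro mult_right_mono) (auto simp: t0_def)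
    also have "(2 * (1 - A0) / \<kappa>) * (\<kappa> / 2) = 1 - A0" using \<kappa> by (simp add: field_simps)
    finally show "A0 + t0 * (\<kappa> / 2) \<ge> 1" by linarith
  qed
  have slater: "c y us0 \<ge> 1" if y: "y \<in> cball x e2" for y
  proof -
    have y1: "y \<in> cball x e1" using C2K y by blast
    have yK: "y \<in> K" using C1K y1 by blast
    have yX: "y \<in> X" using KX yK by blast
    have au: "aug us0 = aug 0 + t0 *\<^sub>R emb d" using aug_add[of 0 t0 d] by (simp add: us0_def)
    have tri: "sqrt (qf (S y) (aug us0)) \<le> sqrt (qf (S y) (aug 0)) + t0 * sqrt (qf (S y) (emb d))"
    proof -
      have "sqrt (qf (S y) (aug us0)) \<le> sqrt (qf (S y) (aug 0)) + sqrt (qf (S y) (t0 *\<^sub>R emb d))"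
        unfolding au qf_def by (rule psd_triangle[OF sym psd[OF yX]])
      also have "sqrt (qf (S y) (t0 *\<^sub>R emb d)) = t0 * sqrt (qf (S y) (emb d))"
        using t0(1) by (simp add: qf_scale real_sqrt_mult)
      finally show ?thesis .
    qed
    have a0b: "sqrt (qf (S y) (aug 0)) \<le> sqrt SB"
    proof -
      have "qf (S y) (aug 0) \<le> mnorm (S y) * (norm (aug (0::real^'m)))^2"
        using qf_bound[of "S y" "aug 0"] by linarith
      also have "(norm (aug (0::real^'m)))^2 = 1" using norm_aug_sq[of "0::real^'m"] by simp
      finally have "qf (S y) (aug 0) \<le> SB" using SB[OF yK] by linarith
      thus ?thesis by (rule real_sqrt_le_mono)
    qed
    have al: "\<alpha> y \<ge> \<alpha> x - La * e0"
    proof -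
      have "norm (\<alpha> y - \<alpha> x) \<le> La * norm (y - x)" using La(2)[OF yK xK] .
      also have "\<dots> \<le> La * e0" using dK[OF yK] La(1) by (rule mult_left_mono)
      finally show ?thesis by (simp add: abs_le_iff)
    qed
    have "c y us0 = \<alpha> y + t0 * (p y \<bullet> d) - \<beta> * sqrt (qf (S y) (aug us0))"
      by (simp add: c_def cfun_def us0_def)
    also have "\<dots> \<ge> \<alpha> y + t0 * (p y \<bullet> d) - \<beta> * (sqrt SB + t0 * sqrt (qf (S y) (emb d)))"
    proof -
      have "sqrt (qf (S y) (aug us0)) \<le> sqrt SB + t0 * sqrt (qf (S y) (emb d))" using tri a0b by linarith
      thus ?thesis using beta_pos by (simp add: mult_left_mono)
    qed
    finally have "c y us0 \<ge> \<alpha> y - \<beta> * sqrt SB + t0 * (p y \<bullet> d - \<beta> * sqrt (qf (S y) (emb d)))"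
      by (simp add: algebra_simps)
    moreover have "t0 * (p y \<bullet> d - \<beta> * sqrt (qf (S y) (emb d))) \<ge> t0 * (\<kappa> / 2)"
      using slope[OF y] t0(1) by (rule mult_left_mono)
    ultimately show ?thesis using al t0(2) unfolding A0_def by linarith
  qed
  define Y where "Y = ball x e2"
  have YC: "Y \<subseteq> cball x e2" by (auto simp: Y_def)
  have YC1: "Y \<subseteq> cball x e1" using YC C2K by blast
  have YK: "Y \<subseteq> K" using YC1 C1K by blast
  have YX: "Y \<subseteq> X" using YK KX by blast
  have YY: "ball x e2 \<inter> X = Y" using YX by (auto simp: Y_def)
  have pdy: "\<And>w. w \<noteq> 0 \<Longrightarrow> qf (S y) w > 0" if "y \<in> X" for y using pd[OF that] by blast
  have conc: "c y b \<le> c y a + G y a \<bullet> (b - a)" if "y \<in> X" for y a b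
    unfolding c_def G_def using cfun_conc[OF sym pdy[OF that], of \<beta>] beta_pos by simp
  have contc: "continuous_on UNIV (c y)" for y
    using continuous_cfun[of \<beta> "\<alpha> y" "p y" "S y"] by (simp add: c_def[abs_def])
  have ex1: "\<exists>!u. socp_minimizer \<beta> \<gamma> B gradB ft gt uref k sn xs us zs y u" if y: "y \<in> Y" for y
  proof -
    have yX: "y \<in> X" using YX y by blast
    have sl: "c y us0 \<ge> 0" using slater[of y] YC y by force
    obtain u where u: "c y u \<ge> 0" "\<forall>v. c y v \<ge> 0 \<longrightarrow> norm (u - uref y) \<le> norm (v - uref y)"
      using exists_min[OF contc sl, of "uref y"] by blast
    show ?thesis
    proof (rule ex1I[of _ u])
      show "socp_minimizer \<beta> \<gamma> B gradB ft gt uref k sn xs us zs y u" using u minim by blast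
      fix w assume "socp_minimizer \<beta> \<gamma> B gradB ft gt uref k sn xs us zs y w"
      hence w: "c y w \<ge> 0" "\<forall>v. c y v \<ge> 0 \<longrightarrow> norm (w - uref y) \<le> norm (v - uref y)" using minim by auto
      show "w = u" by (rule unique_min[OF conc[OF yX] w u])
    qed
  qed
  define ustar where "ustar y = (THE u. socp_minimizer \<beta> \<gamma> B gradB ft gt uref k sn xs us zs y u)" for y
  have ust: "c y (ustar y) \<ge> 0 \<and> (\<forall>v. c y v \<ge> 0 \<longrightarrow> norm (ustar y - uref y) \<le> norm (v - uref y))" if "y \<in> Y" for y
    using theI'[OF ex1[OF that]] minim unfolding ustar_def by blast
  have kkt: "\<exists>\<mu>\<ge>0. ustar y - uref y = \<mu> *\<^sub>R G y (ustar y) \<and> \<mu> * c y (ustar y) = 0" if y: "y \<in> Y" for y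
  proof (rule kkt_single[where us=us0])
    have yX: "y \<in> X" using YX y by blast
    show "((\<lambda>t. c y (ustar y + t *\<^sub>R d)) has_real_derivative G y (ustar y) \<bullet> d) (at 0)" for d
      unfolding c_def G_def by (rule cfun_deriv[OF sym pd[OF yX aug_nonzero]])
    show "c y (ustar y) \<ge> 0" "\<And>v. c y v \<ge> 0 \<Longrightarrow> norm (ustar y - uref y) \<le> norm (v - uref y)" using ust[OF y] by auto
    show "c y us0 > 0" using slater[of y] YC y by force
    show "c y us0 \<le> c y (ustar y) + G y (ustar y) \<bullet> (us0 - ustar y)" by (rule conc[OF yX])
  qed
  have "\<forall>y\<in>Y. \<exists>\<mu>. \<mu> \<ge> 0 \<and> ustar y - uref y = \<mu> *\<^sub>R G y (ustar y) \<and> \<mu> * c y (ustar y) = 0"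
    using kkt by blast
  then obtain mu where mu: "\<And>y. y \<in> Y \<Longrightarrow> mu y \<ge> 0 \<and> ustar y - uref y = mu y *\<^sub>R G y (ustar y) \<and> mu y * c y (ustar y) = 0"
    by (metis bchoice)
  define \<rho> where "\<rho> = 2 * R + norm us0"
  have \<rho>0: "\<rho> \<ge> 0" using R0 by (simp add: \<rho>_def)
  have ub: "norm (ustar y) \<le> \<rho>" if y: "y \<in> Y" for y
  proof -
    have sl: "c y us0 \<ge> 0" using slater[of y] YC y by force
    have "norm (ustar y - uref y) \<le> norm (us0 - uref y)" using ust[OF y] sl by blast
    also have "\<dots> \<le> norm us0 + norm (uref y)" by (rule norm_triangle_ineq4)
    finally have "norm (ustar y - uref y) \<le> norm us0 + norm (uref y)" .
    moreover have "norm (ustar y) \<le> norm (uref y) + norm (ustar y - uref y)"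
      using norm_triangle_ineq[of "uref y" "ustar y - uref y"] by simp
    moreover have "norm (uref y) \<le> R" using Rb YK y by blast
    ultimately show ?thesis unfolding \<rho>_def by linarith
  qed
  obtain Lc LG LGu where LL: "Lc \<ge> 0" "LG \<ge> 0" "LGu \<ge> 0"
    "\<forall>y1\<in>Y. \<forall>y2\<in>Y. \<forall>a. norm a \<le> \<rho> \<longrightarrow> \<bar>cfun \<beta> (\<alpha> y1) (p y1) (S y1) a - cfun \<beta> (\<alpha> y2) (p y2) (S y2) a\<bar> \<le> Lc * norm (y1 - y2)"
    "\<forall>y1\<in>Y. \<forall>y2\<in>Y. \<forall>a. norm a \<le> \<rho> \<longrightarrow> norm (Gfun \<beta> (p y1) (S y1) a - Gfun \<beta> (p y2) (S y2) a) \<le> LG * norm (y1 - y2)"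
    "\<forall>y\<in>Y. \<forall>a b. norm a \<le> \<rho> \<longrightarrow> norm b \<le> \<rho> \<longrightarrow> norm (Gfun \<beta> (p y) (S y) a - Gfun \<beta> (p y) (S y) b) \<le> LGu * norm (a - b)"
  proof -
    have "\<exists>Lc LG LGu. Lc \<ge> 0 \<and> LG \<ge> 0 \<and> LGu \<ge> 0 \<and>
     (\<forall>y1\<in>Y. \<forall>y2\<in>Y. \<forall>a. norm a \<le> \<rho> \<longrightarrow> \<bar>cfun \<beta> (\<alpha> y1) (p y1) (S y1) a - cfun \<beta> (\<alpha> y2) (p y2) (S y2) a\<bar> \<le> Lc * norm (y1 - y2)) \<and>
     (\<forall>y1\<in>Y. \<forall>y2\<in>Y. \<forall>a. norm a \<le> \<rho> \<longrightarrow> norm (Gfun \<beta> (p y1) (S y1) a - Gfun \<beta> (p y2) (S y2) a) \<le> LG * norm (y1 - y2)) \<and>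
     (\<forall>y\<in>Y. \<forall>a b. norm a \<le> \<rho> \<longrightarrow> norm b \<le> \<rho> \<longrightarrow> norm (Gfun \<beta> (p y) (S y) a - Gfun \<beta> (p y) (S y) b) \<le> LGu * norm (a - b))"
    proof (rule family_lip)
      show "\<bar>\<alpha> y1 - \<alpha> y2\<bar> \<le> La * norm (y1 - y2)" if "y1 \<in> Y" "y2 \<in> Y" for y1 y2
        using La(2)[of y1 y2] YK that by auto
      show "norm (p y1 - p y2) \<le> Lp * norm (y1 - y2)" if "y1 \<in> Y" "y2 \<in> Y" for y1 y2
        using Lp(2)[of y1 y2] YK that by auto
      show "mnorm (S y1 - S y2) \<le> LS * norm (y1 - y2)" if "y1 \<in> Y" "y2 \<in> Y" for y1 y2
        using LS(2)[of y1 y2] YK that by auto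
      show "qf (S y) w \<ge> l * (norm w)^2" if "y \<in> Y" for y w using lb[of y w] YC1 that by auto
      show "mnorm (S y) \<le> SB" if "y \<in> Y" for y using SB[of y] YK that by auto
    qed (use l0 La(1) Lp(1) LS(1) beta_pos \<rho>0 SB0 in auto)
    thus ?thesis using that by blast
  qed
  define g0 where "g0 = 1 / (norm us0 + \<rho> + 1)"
  have pos1: "norm us0 + \<rho> + 1 > 0" using \<rho>0 by (simp add: add_pos_nonneg add.commute)
  have g00: "g0 > 0" using pos1 by (simp add: g0_def)
  have Gb: "norm (G y a) \<ge> g0" if y: "y \<in> Y" and a: "norm a \<le> \<rho>" and ca: "c y a = 0" for y a
  proof -
    have yX: "y \<in> X" using YX y by blast
    have "1 \<le> c y us0" using slater[of y] YC y by force
    also have "\<dots> \<le> c y a + G y a \<bullet> (us0 - a)" by (rule conc[OF yX])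
    also have "\<dots> = G y a \<bullet> (us0 - a)" using ca by simp
    also have "\<dots> \<le> norm (G y a) * norm (us0 - a)" by (rule order_trans[OF abs_ge_self Cauchy_Schwarz_ineq2])
    also have "\<dots> \<le> norm (G y a) * (norm us0 + \<rho> + 1)"
      using norm_triangle_ineq4[of us0 a] a by (intro mult_left_mono) auto
    finally have h: "1 \<le> norm (G y a) * (norm us0 + \<rho> + 1)" .
    thus ?thesis using pos1 by (simp add: g0_def divide_le_eq)
  qed
  have core: "\<exists>L. \<forall>y1\<in>Y. \<forall>y2\<in>Y. norm (ustar y1 - ustar y2) \<le> L * norm (y1 - y2)"
  proof (rule lip_core[where c=c and G=G and r=uref and u=ustar and mu=mu and Y=Y and \<rho>=\<rho> and R=R
        and Lr=Lr and Lc=Lc and LG=LG and LGu=LGu and ?g0.0=g0])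
    show "c y (ustar y) \<ge> 0 \<and> mu y \<ge> 0 \<and> mu y * c y (ustar y) = 0 \<and> ustar y - uref y = mu y *\<^sub>R G y (ustar y)"
      if "y \<in> Y" for y using mu[OF that] ust[OF that] by blast
    show "c y b \<le> c y a + G y a \<bullet> (b - a)" if "y \<in> Y" for y a b using conc YX that by blast
    show "norm (ustar y) \<le> \<rho>" if "y \<in> Y" for y using ub[OF that] .
    show "norm (uref y) \<le> R" if "y \<in> Y" for y using Rb YK that by blast
    show "norm (uref y1 - uref y2) \<le> Lr * norm (y1 - y2)" if "y1 \<in> Y" "y2 \<in> Y" for y1 y2
      using Lr(2) YK that by blast
    show "\<bar>c y1 a - c y2 a\<bar> \<le> Lc * norm (y1 - y2)" if "y1 \<in> Y" "y2 \<in> Y" "norm a \<le> \<rho>" for y1 y2 a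
      using LL(4) that unfolding c_def by blast
    show "norm (G y1 a - G y2 a) \<le> LG * norm (y1 - y2)" if "y1 \<in> Y" "y2 \<in> Y" "norm a \<le> \<rho>" for y1 y2 a
      using LL(5) that unfolding G_def by blast
    show "norm (G y a - G y b) \<le> LGu * norm (a - b)" if "y \<in> Y" "norm a \<le> \<rho>" "norm b \<le> \<rho>" for y a b
      using LL(6) that unfolding G_def by blast
    show "norm (G y a) \<ge> g0" if "y \<in> Y" "norm a \<le> \<rho>" "c y a = 0" for y a using Gb that by blast
  qed (use g00 Lr(1) LL(1,2,3) \<rho>0 R0 in auto)
  then obtain L where L: "\<forall>y1\<in>Y. \<forall>y2\<in>Y. norm (ustar y1 - ustar y2) \<le> L * norm (y1 - y2)" by blast
  show ?thesis
  proof (rule exI[of _ e2], intro conjI)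
    show "e2 > 0" by (rule e2(1))
    show "\<forall>y\<in>ball x e2 \<inter> X. \<exists>!u. socp_minimizer \<beta> \<gamma> B gradB ft gt uref k sn xs us zs y u"
      unfolding YY using ex1 by blast
    show "\<exists>L. \<forall>y1\<in>ball x e2 \<inter> X. \<forall>y2\<in>ball x e2 \<inter> X.
              dist (THE u. socp_minimizer \<beta> \<gamma> B gradB ft gt uref k sn xs us zs y1 u)
                   (THE u. socp_minimizer \<beta> \<gamma> B gradB ft gt uref k sn xs us zs y2 u)
              \<le> L * dist y1 y2"
      unfolding YY using L by (intro exI[of _ L]) (simp add: dist_norm ustar_def)
  qed
qed


end
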